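(* Let $p$ be a prime and $X$ a countable set. A matrix $M=(a_{ij})_{i,j\in X}$ with entries in $\mathbb{Q}_p$ is of the form $M=M_A$ for some $A\in\mathcal{B}(\mathbb{Q}_p(X))$ if and only if (a) $M$ has only finitely many entries in $\mathbb{Q}_p\setminus\mathbb{Z}_p$, and (b) for every $k\in X$ one has $\lim_{i\to\infty}a_{ik}=0$ and $\lim_{j\to\infty}a_{kj}=0$ (limits along the cofinite filter on $X$, i.e. for every $\varepsilon>0$ only finitely many $i$ satisfy $|a_{ik}|_p>\varepsilon$, and similarly for $j$).
   Context: $\mathbb{Q}_p(X)$ is the set of maps $\xi:X\to\mathbb{Q}_p$ with $|\xi(i)|_p\le1$ for all but finitely many $i$, a $\mathbb{Z}_p$-module under coordinatewise operations, with the topology $\tau$ in which $A\subseteq\mathbb{Q}_p(X)$ is open iff for every finite $P\subseteq X$ the set $A\cap\big(\prod_{i\in P}\mathbb{Q}_p\times\prod_{j\in X\setminus P}\mathbb{Z}_p\big)$ is open in the product topology. $\mathcal{B}(\mathbb{Q}_p(X))$ is the set of $\tau$-continuous $\mathbb{Z}_p$-linear maps on $\mathbb{Q}_p(X)$. For $x\in X$, $\delta_x\in\mathbb{Q}_p(X)$ is given by $\delta_x(x)=1$, $\delta_x(y)=0$ for $y\ne x$. For $A\in\mathcal{B}(\mathbb{Q}_p(X))$, its matrix is $M_A=(A_{ij})_{i,j\in X}$ with $A_{ij}=(A\delta_j)(i)$. *)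

theory Defs
  imports "HOL-Analysis.Analysis"
begin

text \<open>An element x of Q_p is represented by the coherent sequence of its residues
  modulo p^n Z_p (n = 0,1,2,...), i.e. by the isomorphism
  Q_p = lim_n Q_p / p^n Z_p, where Q_p / p^n Z_p = Z[1/p] / p^n Z and each residue
  class is represented by its unique representative in Z[1/p] intersected with [0, p^n).\<close>

definition rmod :: "rat \<Rightarrow> rat \<Rightarrow> rat" where
  "rmod r m = r - of_int (floor (r / m)) * m"

definition padic_set :: "nat \<Rightarrow> (nat \<Rightarrow> rat) set" where
  "padic_set p = {x. \<forall>n.
      (\<exists>(a::int) (k::nat). x n = of_int a / of_nat p ^ k)
    \<and> 0 \<le> x n \<and> x n < of_nat p ^ n
    \<and> (\<exists>z::int. x (Suc n) - x n = of_int z * of_nat p ^ n)}"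

definition Zp :: "nat \<Rightarrow> (nat \<Rightarrow> rat) set" where
  "Zp p = {x \<in> padic_set p. x 0 = 0}"

definition padic_zero :: "nat \<Rightarrow> rat" where
  "padic_zero = (\<lambda>n. 0)"

definition padic_one :: "nat \<Rightarrow> nat \<Rightarrow> rat" where
  "padic_one p = (\<lambda>n. rmod 1 (of_nat p ^ n))"

definition padic_add :: "nat \<Rightarrow> (nat \<Rightarrow> rat) \<Rightarrow> (nat \<Rightarrow> rat) \<Rightarrow> (nat \<Rightarrow> rat)" where
  "padic_add p x y = (\<lambda>n. rmod (x n + y n) (of_nat p ^ n))"

definition padic_neg :: "nat \<Rightarrow> (nat \<Rightarrow> rat) \<Rightarrow> (nat \<Rightarrow> rat)" where
  "padic_neg p x = (\<lambda>n. rmod (- x n) (of_nat p ^ n))"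

text \<open>Scalar multiplication Z_p x Q_p -> Q_p. If x 0 has denominator D = p^d then
  c x is congruent to c_(n+D) x_n modulo p^n Z_p (as D \<ge> d).\<close>
definition padic_smul :: "nat \<Rightarrow> (nat \<Rightarrow> rat) \<Rightarrow> (nat \<Rightarrow> rat) \<Rightarrow> (nat \<Rightarrow> rat)" where
  "padic_smul p c x = (\<lambda>n. rmod (c (n + nat (snd (quotient_of (x 0)))) * x n) (of_nat p ^ n))"

definition padic_abs :: "nat \<Rightarrow> (nat \<Rightarrow> rat) \<Rightarrow> real" where
  "padic_abs p x =
     (if (\<forall>n. x n = 0) then 0
      else if x 0 \<noteq> 0 then real_of_int (snd (quotient_of (x 0)))
      else real p powr (- real (LEAST n. x (Suc n) \<noteq> 0)))"

definition padic_dist :: "nat \<Rightarrow> (nat \<Rightarrow> rat) \<Rightarrow> (nat \<Rightarrow> rat) \<Rightarrow> real" where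
  "padic_dist p x y = padic_abs p (padic_add p x (padic_neg p y))"

definition padic_top :: "nat \<Rightarrow> (nat \<Rightarrow> rat) topology" where
  "padic_top p = Metric_space.mtopology (padic_set p) (padic_dist p)"

definition QpX :: "nat \<Rightarrow> ('x \<Rightarrow> nat \<Rightarrow> rat) set" where
  "QpX p = {\<xi>. (\<forall>i. \<xi> i \<in> padic_set p) \<and> finite {i. \<xi> i \<notin> Zp p}}"

definition QpX_add :: "nat \<Rightarrow> ('x \<Rightarrow> nat \<Rightarrow> rat) \<Rightarrow> ('x \<Rightarrow> nat \<Rightarrow> rat) \<Rightarrow> ('x \<Rightarrow> nat \<Rightarrow> rat)" where
  "QpX_add p \<xi> \<eta> = (\<lambda>i. padic_add p (\<xi> i) (\<eta> i))"

definition QpX_smul :: "nat \<Rightarrow> (nat \<Rightarrow> rat) \<Rightarrow> ('x \<Rightarrow> nat \<Rightarrow> rat) \<Rightarrow> ('x \<Rightarrow> nat \<Rightarrow> rat)" where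
  "QpX_smul p c \<xi> = (\<lambda>i. padic_smul p c (\<xi> i))"

definition block_top :: "nat \<Rightarrow> 'x set \<Rightarrow> ('x \<Rightarrow> nat \<Rightarrow> rat) topology" where
  "block_top p P = product_topology
      (\<lambda>i. if i \<in> P then padic_top p else subtopology (padic_top p) (Zp p)) UNIV"

definition tau_open :: "nat \<Rightarrow> ('x \<Rightarrow> nat \<Rightarrow> rat) set \<Rightarrow> bool" where
  "tau_open p A \<longleftrightarrow> A \<subseteq> QpX p \<and>
     (\<forall>P. finite P \<longrightarrow> openin (block_top p P) (A \<inter> topspace (block_top p P)))"

definition tau_continuous :: "nat \<Rightarrow> (('x \<Rightarrow> nat \<Rightarrow> rat) \<Rightarrow> ('x \<Rightarrow> nat \<Rightarrow> rat)) \<Rightarrow> bool" where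
  "tau_continuous p A \<longleftrightarrow> (\<forall>U. tau_open p U \<longrightarrow> tau_open p {\<xi> \<in> QpX p. A \<xi> \<in> U})"

definition Zp_linear :: "nat \<Rightarrow> (('x \<Rightarrow> nat \<Rightarrow> rat) \<Rightarrow> ('x \<Rightarrow> nat \<Rightarrow> rat)) \<Rightarrow> bool" where
  "Zp_linear p A \<longleftrightarrow> (\<forall>\<xi>\<in>QpX p. A \<xi> \<in> QpX p)
     \<and> (\<forall>\<xi>\<in>QpX p. \<forall>\<eta>\<in>QpX p. A (QpX_add p \<xi> \<eta>) = QpX_add p (A \<xi>) (A \<eta>))
     \<and> (\<forall>c\<in>Zp p. \<forall>\<xi>\<in>QpX p. A (QpX_smul p c \<xi>) = QpX_smul p c (A \<xi>))"

definition bounded_ops :: "nat \<Rightarrow> (('x \<Rightarrow> nat \<Rightarrow> rat) \<Rightarrow> ('x \<Rightarrow> nat \<Rightarrow> rat)) set" where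
  "bounded_ops p = {A. Zp_linear p A \<and> tau_continuous p A}"

definition delta :: "nat \<Rightarrow> 'x \<Rightarrow> ('x \<Rightarrow> nat \<Rightarrow> rat)" where
  "delta p x = (\<lambda>y. if y = x then padic_one p else padic_zero)"

definition op_matrix :: "nat \<Rightarrow> (('x \<Rightarrow> nat \<Rightarrow> rat) \<Rightarrow> ('x \<Rightarrow> nat \<Rightarrow> rat)) \<Rightarrow> 'x \<Rightarrow> 'x \<Rightarrow> (nat \<Rightarrow> rat)" where
  "op_matrix p A = (\<lambda>i j. A (delta p j) i)"

end

theory Submission
  imports Defs "HOL-Computational_Algebra.Primes"
begin

locale padic =
  fixes p :: nat
  assumes pp: "prime p"
begin

lemma p2: "p \<ge> 2" using pp prime_ge_2_nat by blast

lemma qpos: "(0::rat) < of_nat p ^ n" using p2 by simp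

definition cg :: "nat \<Rightarrow> rat \<Rightarrow> rat \<Rightarrow> bool" where
  "cg n r s \<longleftrightarrow> (\<exists>z::int. r - s = of_int z * of_nat p ^ n)"

definition dn :: "nat \<Rightarrow> rat \<Rightarrow> bool" where
  "dn e r \<longleftrightarrow> (\<exists>z::int. of_nat p ^ e * r = of_int z)"

lemma cg_refl[simp]: "cg n r r" unfolding cg_def by (rule exI[of _ 0]) simp

lemma cg_sym: "cg n r s \<Longrightarrow> cg n s r"
  unfolding cg_def by (metis minus_diff_eq mult_minus_left of_int_minus)

lemma cg_trans: "cg n r s \<Longrightarrow> cg n s t \<Longrightarrow> cg n r t"
  unfolding cg_def
proof (elim exE)
  fix z1 z2 :: int assume "r - s = of_int z1 * of_nat p ^ n" "s - t = of_int z2 * of_nat p ^ n"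
  then have "r - t = of_int (z1 + z2) * of_nat p ^ n" by (simp add: algebra_simps)
  then show "\<exists>z::int. r - t = of_int z * of_nat p ^ n" by blast
qed

lemma cg_add: "cg n r s \<Longrightarrow> cg n r' s' \<Longrightarrow> cg n (r + r') (s + s')"
  unfolding cg_def
proof (elim exE)
  fix z1 z2 :: int assume "r - s = of_int z1 * of_nat p ^ n" "r' - s' = of_int z2 * of_nat p ^ n"
  then have "r + r' - (s + s') = of_int (z1 + z2) * of_nat p ^ n" by (simp add: algebra_simps)
  then show "\<exists>z::int. r + r' - (s + s') = of_int z * of_nat p ^ n" by blast
qed

lemma cg_neg: "cg n r s \<Longrightarrow> cg n (- r) (- s)"
  unfolding cg_def
proof (elim exE)
  fix z1 :: int assume "r - s = of_int z1 * of_nat p ^ n"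
  then have "- r - (- s) = of_int (- z1) * of_nat p ^ n" by (simp add: algebra_simps)
  then show "\<exists>z::int. - r - (- s) = of_int z * of_nat p ^ n" by blast
qed

lemma cg_mono: "cg m r s \<Longrightarrow> n \<le> m \<Longrightarrow> cg n r s"
  unfolding cg_def
proof (elim exE)
  fix z1 :: int assume a: "r - s = of_int z1 * of_nat p ^ m" and "n \<le> m"
  then have "(of_nat p ^ m :: rat) = of_nat p ^ (m - n) * of_nat p ^ n"
    by (simp add: power_add[symmetric])
  with a have "r - s = of_int (z1 * int p ^ (m - n)) * of_nat p ^ n" by simp
  then show "\<exists>z::int. r - s = of_int z * of_nat p ^ n" by blast
qed

lemma cg_zero_iff: "cg n r 0 \<longleftrightarrow> (\<exists>z::int. r = of_int z * of_nat p ^ n)"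
  unfolding cg_def by simp

lemma cg_pow: "cg n (of_int z * of_nat p ^ n) 0"
  unfolding cg_def by auto

lemma cg_mult_dn: "cg (n + e) r s \<Longrightarrow> dn e t \<Longrightarrow> cg n (t * r) (t * s)"
  unfolding cg_def dn_def
proof (elim exE)
  fix z1 z2 :: int assume a: "r - s = of_int z1 * of_nat p ^ (n + e)" and b: "of_nat p ^ e * t = of_int z2"
  have "t * r - t * s = t * (r - s)" by (simp add: algebra_simps)
  also have "\<dots> = (of_nat p ^ e * t) * of_int z1 * of_nat p ^ n" using a by (simp add: power_add algebra_simps)
  also have "\<dots> = of_int (z2 * z1) * of_nat p ^ n" using b by simp
  finally show "\<exists>z::int. t * r - t * s = of_int z * of_nat p ^ n" by blast
qed

lemma cg_mult_dn': "cg m r s \<Longrightarrow> dn e t \<Longrightarrow> n + e \<le> m \<Longrightarrow> cg n (t * r) (t * s)"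
  using cg_mono cg_mult_dn by blast

lemma cg_mult_dn2: "cg m r s \<Longrightarrow> dn e t \<Longrightarrow> n + e \<le> m \<Longrightarrow> cg n (r * t) (s * t)"
  using cg_mult_dn'[of m r s e t n] by (simp add: mult.commute)

lemma cg_sum: "(\<And>j. j \<in> S \<Longrightarrow> cg n (f j) (g j)) \<Longrightarrow> cg n (sum f S) (sum g S)"
proof (induction S rule: infinite_finite_induct)
  case (insert x F) then show ?case by (simp add: cg_add)
qed auto

lemma dn_mono: "dn e r \<Longrightarrow> e \<le> e' \<Longrightarrow> dn e' r"
  unfolding dn_def
proof (elim exE)
  fix z assume a: "of_nat p ^ e * r = of_int z" and "e \<le> e'"
  then have "(of_nat p ^ e' :: rat) = of_nat p ^ (e' - e) * of_nat p ^ e"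
    by (simp add: power_add[symmetric])
  then have "of_nat p ^ e' * r = of_int (int p ^ (e' - e) * z)" using a by (simp add: mult.assoc)
  then show "\<exists>z::int. of_nat p ^ e' * r = of_int z" by blast
qed

lemma dn_int[simp]: "dn e (of_int z)"
  unfolding dn_def by (rule exI[of _ "int p ^ e * z"]) simp

lemma dn_0[simp]: "dn e 0" using dn_int[of e 0] by simp
lemma dn_1[simp]: "dn e 1" using dn_int[of e 1] by simp

lemma dn_add: "dn e r \<Longrightarrow> dn e s \<Longrightarrow> dn e (r + s)"
  unfolding dn_def by (metis distrib_left of_int_add)

lemma dn_mult: "dn e r \<Longrightarrow> dn e' s \<Longrightarrow> dn (e + e') (r * s)"
  unfolding dn_def
proof (elim exE)
  fix z1 z2 assume "of_nat p ^ e * r = of_int z1" "of_nat p ^ e' * s = of_int z2"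
  then have "of_nat p ^ (e + e') * (r * s) = of_int (z1 * z2)"
    by (simp add: power_add algebra_simps) (metis mult.assoc mult.left_commute)
  then show "\<exists>z::int. of_nat p ^ (e + e') * (r * s) = of_int z" by blast
qed

lemma dn_sum: "(\<And>j. j \<in> S \<Longrightarrow> dn e (f j)) \<Longrightarrow> dn e (sum f S)"
proof (induction S rule: infinite_finite_induct)
  case (insert x F) then show ?case by (simp add: dn_add)
qed auto

lemma dn_cg: "dn e r \<Longrightarrow> cg n r s \<Longrightarrow> dn e s"
  unfolding dn_def cg_def
proof (elim exE)
  fix z1 z2 assume a: "of_nat p ^ e * r = of_int z1" and b: "r - s = of_int z2 * of_nat p ^ n"
  have "s = r - of_int z2 * of_nat p ^ n" using b by simp
  then have "of_nat p ^ e * s = of_nat p ^ e * r - of_nat p ^ e * (of_int z2 * of_nat p ^ n)"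
    by (simp add: right_diff_distrib)
  also have "\<dots> = of_int (z1 - int p ^ e * z2 * int p ^ n)" using a by simp
  finally have "of_nat p ^ e * s = of_int (z1 - int p ^ e * z2 * int p ^ n)" .
  then show "\<exists>z::int. of_nat p ^ e * s = of_int z" by blast
qed

lemma dn0_iff: "dn 0 r \<longleftrightarrow> r \<in> \<int>"
  unfolding dn_def by (auto elim: Ints_cases)

lemma cg0_iff: "cg 0 r s \<longleftrightarrow> r - s \<in> \<int>"
  unfolding cg_def by (auto elim: Ints_cases)

lemma dn_of_nat_pow: "dn e (of_nat p ^ k)"
  using dn_int[of e "int p ^ k"] by simp

lemma dn_inv_pow: "dn n (1 / of_nat p ^ n)"
  unfolding dn_def using qpos[of n] by (intro exI[of _ 1]) simp

lemma rmod_ge: "0 \<le> rmod r (of_nat p ^ n)"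
proof -
  have q: "(0::rat) < of_nat p ^ n" by (rule qpos)
  have "of_int (floor (r / of_nat p ^ n)) * of_nat p ^ n \<le> r" using q by (rule floor_divide_lower)
  then show ?thesis unfolding rmod_def by simp
qed

lemma rmod_lt: "rmod r (of_nat p ^ n) < of_nat p ^ n"
proof -
  have q: "(0::rat) < of_nat p ^ n" by (rule qpos)
  have "r < (of_int (floor (r / of_nat p ^ n)) + 1) * of_nat p ^ n" using q by (rule floor_divide_upper)
  then show ?thesis unfolding rmod_def by (simp add: algebra_simps)
qed

lemma cg_rmod: "cg n (rmod r (of_nat p ^ n)) r"
  unfolding cg_def rmod_def by (rule exI[of _ "- floor (r / of_nat p ^ n)"]) simp

lemma cg_rmod': "cg n r (rmod r (of_nat p ^ n))"
  using cg_rmod cg_sym by blast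

lemma cg_unique: "cg n u v \<Longrightarrow> 0 \<le> u \<Longrightarrow> u < of_nat p ^ n \<Longrightarrow> 0 \<le> v \<Longrightarrow> v < of_nat p ^ n \<Longrightarrow> u = v"
  unfolding cg_def
proof (elim exE)
  fix z :: int assume a: "u - v = of_int z * of_nat p ^ n" and b: "0 \<le> u" "u < of_nat p ^ n" "0 \<le> v" "v < of_nat p ^ n"
  have q: "(0::rat) < of_nat p ^ n" by (rule qpos)
  have "of_int z * of_nat p ^ n < (1::rat) * of_nat p ^ n" using a b by simp
  then have "of_int z < (1::rat)" using q mult_less_cancel_right_pos by blast
  moreover have "(-1::rat) * of_nat p ^ n < of_int z * of_nat p ^ n" using a b by simp
  then have "(-1::rat) < of_int z" using q mult_less_cancel_right_pos by blast
  ultimately have "z = 0" by linarith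
  then show "u = v" using a by simp
qed

lemma rmod_cg_eq: "cg n r s \<Longrightarrow> rmod r (of_nat p ^ n) = rmod s (of_nat p ^ n)"
  by (meson cg_rmod cg_rmod' cg_trans cg_unique rmod_ge rmod_lt)

lemma rmod_id: "0 \<le> r \<Longrightarrow> r < of_nat p ^ n \<Longrightarrow> rmod r (of_nat p ^ n) = r"
  by (meson cg_rmod cg_unique rmod_ge rmod_lt)

lemma rmod_0[simp]: "rmod 0 (of_nat p ^ n) = 0"
  using rmod_id[of 0 n] qpos by simp

lemma rmod_eq_0: "cg n r 0 \<Longrightarrow> rmod r (of_nat p ^ n) = 0"
  using rmod_cg_eq by fastforce

lemma dn_rmod: "dn e r \<Longrightarrow> dn e (rmod r (of_nat p ^ n))"
  using dn_cg cg_rmod' by blast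

lemma zp1_iff: "(\<exists>(a::int) (k::nat). r = of_int a / of_nat p ^ k) \<longleftrightarrow> (\<exists>e. dn e r)"
proof
  assume "\<exists>(a::int) (k::nat). r = of_int a / of_nat p ^ k"
  then obtain a k where "r = of_int a / of_nat p ^ k" by blast
  then have "of_nat p ^ k * r = of_int a" using qpos[of k] by simp
  then show "\<exists>e. dn e r" unfolding dn_def by blast
next
  assume "\<exists>e. dn e r"
  then obtain e z where "of_nat p ^ e * r = of_int z" unfolding dn_def by blast
  then have "r = of_int z / of_nat p ^ e" using qpos[of e] by (simp add: field_simps)
  then show "\<exists>(a::int) (k::nat). r = of_int a / of_nat p ^ k" by blast
qed


definition den :: "rat \<Rightarrow> int" where "den r = snd (quotient_of r)"

lemma den_pos: "den r > 0" unfolding den_def by (rule quotient_of_denom_pos')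

lemma den_dvd_iff: "of_int d * r \<in> \<int> \<longleftrightarrow> den r dvd d"
proof -
  obtain a b where q: "quotient_of r = (a, b)" by (cases "quotient_of r")
  have b: "b > 0" using q quotient_of_denom_pos by blast
  have c: "coprime a b" using q quotient_of_coprime by blast
  have r: "r = of_int a / of_int b" using q quotient_of_div by blast
  have db: "den r = b" unfolding den_def q by simp
  have "of_int d * r \<in> \<int> \<longleftrightarrow> b dvd d * a"
  proof
    assume "of_int d * r \<in> \<int>"
    then obtain k where "of_int d * r = (of_int k :: rat)" by (auto elim: Ints_cases)
    then have "of_int d * of_int a = (of_int (b * k) :: rat)" using b r by (simp add: field_simps)
    then have "d * a = b * k" by (metis of_int_eq_iff of_int_mult)
    then show "b dvd d * a" by simp
  next
    assume "b dvd d * a"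
    then obtain k where k: "d * a = b * k" by blast
    have "of_int d * r = of_int (d * a) / (of_int b :: rat)" using r by simp
    also have "\<dots> = of_int k" using k b by simp
    finally show "of_int d * r \<in> \<int>" by simp
  qed
  also have "\<dots> \<longleftrightarrow> b dvd d" using c by (simp add: coprime_commute coprime_dvd_mult_left_iff)
  finally show ?thesis using db by simp
qed

lemma dn_iff_den: "dn e r \<longleftrightarrow> den r dvd int p ^ e"
proof -
  have "dn e r \<longleftrightarrow> of_int (int p ^ e) * r \<in> \<int>" unfolding dn_def by (auto elim: Ints_cases)
  moreover have "of_int (int p ^ e) = (of_nat p ^ e :: rat)" by simp
  ultimately show ?thesis using den_dvd_iff[of "int p ^ e" r] by simp
qed

lemma den_self: "of_int (den r) * r \<in> \<int>" using den_dvd_iff by simp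

lemma den_eqI: "(\<And>d. of_int d * r \<in> \<int> \<longleftrightarrow> of_int d * s \<in> \<int>) \<Longrightarrow> den r = den s"
  by (meson den_dvd_iff den_pos dvd_refl less_le zdvd_antisym_nonneg)

lemma den_add_int: "den (r + of_int z) = den r"
proof (rule den_eqI)
  fix d :: int
  have "of_int d * (r + of_int z) = of_int d * r + of_int (d * z)" by (simp add: algebra_simps)
  then show "of_int d * (r + of_int z) \<in> \<int> \<longleftrightarrow> of_int d * r \<in> \<int>"
    by (metis Ints_add Ints_diff Ints_of_int add_diff_cancel_right')
qed

lemma den_minus: "den (- r) = den r"
proof (rule den_eqI)
  fix d :: int
  show "of_int d * (- r) \<in> \<int> \<longleftrightarrow> of_int d * r \<in> \<int>"
    by (metis Ints_minus minus_minus mult_minus_right)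
qed

lemma den_int: "r \<in> \<int> \<Longrightarrow> den r = 1"
proof -
  assume "r \<in> \<int>"
  then have d: "den r dvd 1" using den_dvd_iff[of 1 r] by simp
  show ?thesis using zdvd_imp_le[OF d] den_pos[of r] by linarith
qed

lemma den_ge1: "real_of_int (den r) \<ge> 1" using den_pos[of r] by simp

lemma den_powp: "dn e r \<Longrightarrow> \<exists>j\<le>e. den r = int p ^ j"
proof -
  assume "dn e r"
  then have "den r dvd int p ^ e" using dn_iff_den by blast
  then have "nat (den r) dvd p ^ e" using den_pos[of r]
    by (metis int_dvd_int_iff int_nat_eq less_le_not_le of_nat_power)
  then obtain j where "j \<le> e" "nat (den r) = p ^ j" using divides_primepow_nat[OF pp] by blast
  then show ?thesis using den_pos[of r] by (metis int_nat_eq less_le_not_le of_nat_power)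
qed

lemma dn_den_self: "dn e r \<Longrightarrow> dn (nat (den r)) r"
proof -
  assume "dn e r"
  then obtain j where j: "den r = int p ^ j" using den_powp by blast
  have "j < 2 ^ j" by (rule less_exp)
  also have "(2::nat) ^ j \<le> p ^ j" using p2 by (simp add: power_mono)
  finally have "j \<le> nat (den r)" using j by (simp add: nat_power_eq)
  then have "int p ^ j dvd int p ^ nat (den r)" by (rule le_imp_power_dvd)
  then show ?thesis using j dn_iff_den by simp
qed

lemma den_add_le: "dn e r \<Longrightarrow> dn e s \<Longrightarrow> den (r + s) \<le> max (den r) (den s)"
proof -
  assume a: "dn e r" "dn e s"
  obtain i j where ij: "den r = int p ^ i" "den s = int p ^ j" using a den_powp by blast
  have "dn (max i j) r" using ij dn_iff_den by (simp add: le_imp_power_dvd)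
  moreover have "dn (max i j) s" using ij dn_iff_den by (simp add: le_imp_power_dvd)
  ultimately have "dn (max i j) (r + s)" by (rule dn_add)
  then have "den (r + s) dvd int p ^ max i j" using dn_iff_den by blast
  then have "den (r + s) \<le> int p ^ max i j" using p2 by (simp add: zdvd_imp_le)
  also have "\<dots> = max (den r) (den s)" using ij p2
    by (simp add: max_def power_increasing_iff)
  finally show ?thesis .
qed

abbreviation "ps \<equiv> padic_set p"

lemma ps_D:
  assumes "x \<in> ps"
  shows "0 \<le> x n" "x n < of_nat p ^ n" "\<exists>e. dn e (x n)" "cg n (x (Suc n)) (x n)"
  using assms unfolding padic_set_def cg_def zp1_iff[symmetric] by auto

lemma ps_I:
  assumes "\<And>n. \<exists>e. dn e (x n)" "\<And>n. 0 \<le> x n" "\<And>n. x n < of_nat p ^ n" "\<And>n. cg n (x (Suc n)) (x n)"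
  shows "x \<in> ps"
  using assms unfolding padic_set_def cg_def zp1_iff[symmetric] by auto

lemma ps_cg: "x \<in> ps \<Longrightarrow> n \<le> m \<Longrightarrow> cg n (x m) (x n)"
proof (induction m)
  case 0 then show ?case by simp
next
  case (Suc m)
  show ?case
  proof (cases "n = Suc m")
    case False
    then have "n \<le> m" using Suc by simp
    then show ?thesis using Suc ps_D(4)[of x m] cg_mono cg_trans by blast
  qed simp
qed

lemma ps_rmod: "x \<in> ps \<Longrightarrow> m \<le> n \<Longrightarrow> x m = rmod (x n) (of_nat p ^ m)"
  by (metis cg_rmod cg_trans ps_D(1,2) ps_cg cg_unique rmod_ge rmod_lt)

lemma ps_eq_le: "x \<in> ps \<Longrightarrow> y \<in> ps \<Longrightarrow> x n = y n \<Longrightarrow> m \<le> n \<Longrightarrow> x m = y m"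
  using ps_rmod by metis

lemma ps_dn: "x \<in> ps \<Longrightarrow> dn e (x 0) \<Longrightarrow> dn e (x n)"
  using ps_cg[of x 0 n] dn_cg cg_sym by blast

lemma cg0_int: "cg 0 r 0 \<longleftrightarrow> dn 0 r"
  unfolding cg_def dn_def by auto

lemma Zp_iff: "x \<in> Zp p \<longleftrightarrow> x \<in> ps \<and> x 0 = 0"
  unfolding Zp_def by simp

lemma Zp_iff_dn: "x \<in> ps \<Longrightarrow> x \<in> Zp p \<longleftrightarrow> dn 0 (x 0)"
  unfolding Zp_iff using cg_unique[of 0 "x 0" 0] ps_D(1,2)[of x 0] cg0_int by auto

lemma Zp_dn: "x \<in> Zp p \<Longrightarrow> dn 0 (x n)"
  using Zp_iff_dn ps_dn Zp_iff by blast

lemma Zp_ps: "x \<in> Zp p \<Longrightarrow> x \<in> ps" unfolding Zp_iff by simp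

definition emb :: "rat \<Rightarrow> nat \<Rightarrow> rat" where "emb r = (\<lambda>n. rmod r (of_nat p ^ n))"

lemma emb_ps: "dn e r \<Longrightarrow> emb r \<in> ps"
proof (rule ps_I)
  fix n assume "dn e r"
  then show "\<exists>e. dn e (emb r n)" unfolding emb_def using dn_rmod by blast
  show "0 \<le> emb r n" unfolding emb_def by (rule rmod_ge)
  show "emb r n < of_nat p ^ n" unfolding emb_def by (rule rmod_lt)
  have "cg (Suc n) (emb r (Suc n)) r" unfolding emb_def by (rule cg_rmod)
  then have "cg n (emb r (Suc n)) r" using cg_mono by simp
  then show "cg n (emb r (Suc n)) (emb r n)" unfolding emb_def using cg_rmod' cg_trans by blast
qed

lemma emb_Zp: "dn 0 r \<Longrightarrow> emb r \<in> Zp p"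
  using emb_ps Zp_iff_dn dn_rmod unfolding emb_def by blast

lemma zero_emb: "padic_zero = emb 0" unfolding padic_zero_def emb_def by simp
lemma one_emb: "padic_one p = emb 1" unfolding padic_one_def emb_def by simp
lemma zero_Zp: "padic_zero \<in> Zp p" by (simp add: zero_emb emb_Zp)
lemma one_Zp: "padic_one p \<in> Zp p" by (simp add: one_emb emb_Zp)
lemma zero_ps: "padic_zero \<in> ps" using zero_Zp Zp_ps by simp

lemma diff_lvl: "padic_add p x (padic_neg p y) n = rmod (x n - y n) (of_nat p ^ n)"
proof -
  have "cg n (x n + rmod (- y n) (of_nat p ^ n)) (x n + - y n)"
    by (intro cg_add cg_refl cg_rmod)
  then have "rmod (x n + rmod (- y n) (of_nat p ^ n)) (of_nat p ^ n) = rmod (x n + - y n) (of_nat p ^ n)"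
    by (rule rmod_cg_eq)
  then show ?thesis unfolding padic_add_def padic_neg_def by simp
qed

lemma diff_zero_cg: "padic_add p x (padic_neg p y) n = 0 \<longleftrightarrow> cg n (x n) (y n)"
proof -
  have "rmod (x n - y n) (of_nat p ^ n) = 0 \<longleftrightarrow> cg n (x n) (y n)"
  proof
    assume "rmod (x n - y n) (of_nat p ^ n) = 0"
    then have "cg n 0 (x n - y n)" using cg_rmod by metis
    then show "cg n (x n) (y n)" unfolding cg_def by (metis add.inverse_inverse cg_def cg_neg cg_sym diff_0 minus_diff_eq)
  next
    assume "cg n (x n) (y n)"
    then have "cg n (x n - y n) 0" unfolding cg_def by simp
    then show "rmod (x n - y n) (of_nat p ^ n) = 0" by (rule rmod_eq_0)
  qed
  then show ?thesis unfolding diff_lvl .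
qed

lemma diff_den: "den (padic_add p x (padic_neg p y) 0) = den (x 0 - y 0)"
proof -
  have "rmod (x 0 - y 0) 1 = (x 0 - y 0) + of_int (- floor (x 0 - y 0))" unfolding rmod_def by simp
  moreover have "padic_add p x (padic_neg p y) 0 = rmod (x 0 - y 0) 1" using diff_lvl[of x y 0] by simp
  ultimately show ?thesis using den_add_int[of "x 0 - y 0" "- floor (x 0 - y 0)"] by simp
qed

lemma abs_cong: "(\<And>n. a n = 0 \<longleftrightarrow> b n = 0) \<Longrightarrow> den (a 0) = den (b 0) \<Longrightarrow> padic_abs p a = padic_abs p b"
proof -
  assume z: "\<And>n. a n = 0 \<longleftrightarrow> b n = 0" and d: "den (a 0) = den (b 0)"
  have "(\<lambda>k. a (Suc k) \<noteq> 0) = (\<lambda>k. b (Suc k) \<noteq> 0)" using z by auto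
  then show ?thesis unfolding padic_abs_def using z d unfolding den_def by simp
qed

lemma dist_commute: "padic_dist p x y = padic_dist p y x"
  unfolding padic_dist_def
proof (rule abs_cong)
  show "den (padic_add p x (padic_neg p y) 0) = den (padic_add p y (padic_neg p x) 0)"
    unfolding diff_den using den_minus[of "x 0 - y 0"] by simp
  fix n show "padic_add p x (padic_neg p y) n = 0 \<longleftrightarrow> padic_add p y (padic_neg p x) n = 0"
    unfolding diff_zero_cg using cg_sym by blast
qed

lemma abs_nonneg: "padic_abs p w \<ge> 0"
  unfolding padic_abs_def using quotient_of_denom_pos'[of "w 0"] by simp

lemma diff_zero_iff: "x \<in> ps \<Longrightarrow> y \<in> ps \<Longrightarrow> padic_add p x (padic_neg p y) n = 0 \<longleftrightarrow> x n = y n"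
proof -
  assume xy: "x \<in> ps" "y \<in> ps"
  have "rmod (x n - y n) (of_nat p ^ n) = 0 \<longleftrightarrow> cg n (x n) (y n)"
  proof
    assume "rmod (x n - y n) (of_nat p ^ n) = 0"
    then have "cg n 0 (x n - y n)" using cg_rmod by metis
    then show "cg n (x n) (y n)" unfolding cg_def by (metis add.inverse_inverse cg_def cg_neg cg_sym diff_0 minus_diff_eq)
  next
    assume "cg n (x n) (y n)"
    then have "cg n (x n - y n) 0" unfolding cg_def by simp
    then show "rmod (x n - y n) (of_nat p ^ n) = 0" by (rule rmod_eq_0)
  qed
  also have "\<dots> \<longleftrightarrow> x n = y n" by (metis cg_refl cg_unique ps_D(1) ps_D(2) xy(1) xy(2))
  finally show ?thesis unfolding diff_lvl .
qed

lemma dist_cases: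
  assumes xy: "x \<in> ps" "y \<in> ps"
  shows "x = y \<Longrightarrow> padic_dist p x y = 0"
    and "x \<noteq> y \<Longrightarrow> x 0 = y 0 \<Longrightarrow> padic_dist p x y = real p powr (- real (LEAST k. x (Suc k) \<noteq> y (Suc k)))"
    and "x 0 \<noteq> y 0 \<Longrightarrow> padic_dist p x y = real_of_int (den (x 0 - y 0))"
proof -
  let ?w = "padic_add p x (padic_neg p y)"
  have wz: "?w n = 0 \<longleftrightarrow> x n = y n" for n using diff_zero_iff xy by blast
  have "(\<forall>n. ?w n = 0) \<longleftrightarrow> (\<forall>n. x n = y n)" by (simp only: wz)
  then have allz: "(\<forall>n. ?w n = 0) \<longleftrightarrow> x = y" by (simp only: fun_eq_iff[symmetric])
  show "x = y \<Longrightarrow> padic_dist p x y = 0"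
  proof -
    assume "x = y"
    then have "\<forall>n. ?w n = 0" using allz by blast
    then show ?thesis unfolding padic_dist_def padic_abs_def by simp
  qed
  show "x \<noteq> y \<Longrightarrow> x 0 = y 0 \<Longrightarrow> padic_dist p x y = real p powr (- real (LEAST k. x (Suc k) \<noteq> y (Suc k)))"
  proof -
    assume ne: "x \<noteq> y" and x0: "x 0 = y 0"
    have 1: "\<not> (\<forall>n. ?w n = 0)" using allz ne by blast
    have 2: "?w 0 = 0" using wz x0 by blast
    have 3: "(\<lambda>k. ?w (Suc k) \<noteq> 0) = (\<lambda>k. x (Suc k) \<noteq> y (Suc k))" using wz by auto
    have "padic_abs p ?w = real p powr (- real (LEAST k. ?w (Suc k) \<noteq> 0))"
      unfolding padic_abs_def if_not_P[OF 1] using 2 by simp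
    then show ?thesis unfolding padic_dist_def 3 .
  qed
  assume ne: "x 0 \<noteq> y 0"
  have d: "den (?w 0) = den (x 0 - y 0)" by (rule diff_den)
  have 1: "\<not> (\<forall>n. ?w n = 0)" using allz ne by blast
  have 2: "?w 0 \<noteq> 0" using wz ne by blast
  have "padic_dist p x y = real_of_int (den (?w 0))"
    unfolding padic_dist_def padic_abs_def den_def by (simp only: if_not_P[OF 1] if_P[OF 2])
  then show "padic_dist p x y = real_of_int (den (x 0 - y 0))" using d by simp
qed

lemma ps_dn0: "x \<in> ps \<Longrightarrow> \<exists>e. dn e (x 0)" using ps_D(3) by blast

lemma dist_nonneg: "padic_dist p x y \<ge> 0"
  unfolding padic_dist_def by (rule abs_nonneg)

lemma powr_eq: "real p powr (- real L) = 1 / real p ^ L"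
  using p2 by (simp add: powr_minus_divide powr_realpow)

lemma powr_le1: "real p powr (- real L) \<le> 1"
  unfolding powr_eq using p2 by simp

lemma powr_pos: "real p powr (- real L) > 0"
  unfolding powr_eq using p2 by simp

lemma dist_small_iff:
  assumes xy: "x \<in> ps" "y \<in> ps"
  shows "padic_dist p x y < 1 / real p ^ N \<Longrightarrow> x N = y N"
    and "x N = y N \<Longrightarrow> padic_dist p x y \<le> 1 / real p ^ N"
proof -
  have pN: "1 / real p ^ N \<le> 1" using p2 by simp
  show "padic_dist p x y < 1 / real p ^ N \<Longrightarrow> x N = y N"
  proof (rule ccontr)
    assume d: "padic_dist p x y < 1 / real p ^ N" and ne: "x N \<noteq> y N"
    then have "x \<noteq> y" by auto
    show False
    proof (cases "x 0 = y 0")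
      case True
      then obtain k where k: "N = Suc k" using ne by (cases N) auto
      let ?L = "LEAST k. x (Suc k) \<noteq> y (Suc k)"
      have "?L \<le> k" using ne k by (simp add: Least_le)
      then have "real p ^ ?L \<le> real p ^ k" using p2 by (simp add: power_increasing)
      also have "\<dots> \<le> real p ^ N" using p2 k by (simp add: power_increasing)
      finally have "real p ^ ?L \<le> real p ^ N" .
      then have "1 / real p ^ N \<le> 1 / real p ^ ?L" using p2 by (simp add: frac_le)
      then show False using d dist_cases(2)[OF xy \<open>x \<noteq> y\<close> True] powr_eq by simp
    next
      case False
      then show False using d dist_cases(3)[OF xy False] den_ge1[of "x 0 - y 0"] pN by simp
    qed
  qed
  assume eq: "x N = y N"
  show "padic_dist p x y \<le> 1 / real p ^ N"
  proof (cases "x = y")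
    case True then show ?thesis using dist_cases(1)[OF xy] by simp
  next
    case ne: False
    have x0: "x 0 = y 0" using ps_eq_le[OF xy eq] by simp
    let ?L = "LEAST k. x (Suc k) \<noteq> y (Suc k)"
    obtain n where n: "x n \<noteq> y n" using ne by auto
    then obtain k where "n = Suc k" using x0 by (cases n) auto
    then have ex: "x (Suc k) \<noteq> y (Suc k)" using n by simp
    then have "x (Suc ?L) \<noteq> y (Suc ?L)" by (rule LeastI)
    then have "\<not> Suc ?L \<le> N" using ps_eq_le[OF xy eq] by blast
    then have "N \<le> ?L" by simp
    then have "real p ^ N \<le> real p ^ ?L" using p2 by (simp add: power_increasing)
    then have "1 / real p ^ ?L \<le> 1 / real p ^ N" using p2 by (simp add: frac_le)
    then show ?thesis using dist_cases(2)[OF xy ne x0] powr_eq by simp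
  qed
qed

lemma dist_triangle:
  assumes xyz: "x \<in> ps" "y \<in> ps" "z \<in> ps"
  shows "padic_dist p x z \<le> padic_dist p x y + padic_dist p y z"
proof -
  have nn: "padic_dist p x y \<ge> 0" "padic_dist p y z \<ge> 0" using dist_nonneg xyz by auto
  show ?thesis
  proof (cases "x 0 = z 0")
    case True
    show ?thesis
    proof (cases "x = z")
      case True then show ?thesis using dist_cases(1) xyz nn by simp
    next
      case xz: False
      let ?L = "\<lambda>x y. LEAST k. x (Suc k) \<noteq> y (Suc k)"
      have dxz: "padic_dist p x z \<le> 1" using dist_cases(2)[of x z] xyz xz True powr_le1 by simp
      show ?thesis
      proof (cases "x 0 = y 0 \<and> y 0 = z 0")
        case False
        then have "padic_dist p x y \<ge> 1 \<or> padic_dist p y z \<ge> 1"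
          using dist_cases(3) xyz den_ge1 by metis
        then show ?thesis using dxz nn by linarith
      next
        case c0: True
        show ?thesis
        proof (cases "x = y \<or> y = z")
          case True then show ?thesis using dist_cases(1) xyz nn by auto
        next
          case False
          then have xy: "x \<noteq> y" and yz: "y \<noteq> z" by auto
          have ex: "\<exists>k. u (Suc k) \<noteq> v (Suc k)" if "u \<in> ps" "v \<in> ps" "u \<noteq> v" "u 0 = v 0" for u v
          proof -
            have "\<exists>n. u n \<noteq> v n" using that(3) by (metis ext)
            then obtain n where "u n \<noteq> v n" by blast
            then show ?thesis using that by (cases n) auto
          qed
          have "min (?L x y) (?L y z) \<le> ?L x z"
          proof (rule ccontr)
            assume "\<not> ?thesis"
            then have "?L x z < ?L x y" "?L x z < ?L y z" by auto
            then have "x (Suc (?L x z)) = y (Suc (?L x z))" "y (Suc (?L x z)) = z (Suc (?L x z))"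
              using not_less_Least by blast+
            moreover have "x (Suc (?L x z)) \<noteq> z (Suc (?L x z))"
              using ex[OF xyz(1,3) xz True] by (rule LeastI_ex)
            ultimately show False by simp
          qed
          then have "real p powr (- real (?L x z)) \<le> real p powr (- real (?L x y)) \<or>
                     real p powr (- real (?L x z)) \<le> real p powr (- real (?L y z))"
            using p2 by (cases "?L x y \<le> ?L y z") (auto intro!: powr_mono)
          moreover have "padic_dist p x z = real p powr (- real (?L x z))"
            using dist_cases(2)[of x z] xyz xz c0 by simp
          moreover have "padic_dist p x y = real p powr (- real (?L x y))"
            using dist_cases(2)[of x y] xyz xy c0 by simp
          moreover have "padic_dist p y z = real p powr (- real (?L y z))"
            using dist_cases(2)[of y z] xyz yz c0 by simp
          ultimately have "padic_dist p x z \<le> padic_dist p x y \<or> padic_dist p x z \<le> padic_dist p y z"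
            by simp
          then show ?thesis using nn by linarith
        qed
      qed
    qed
  next
    case False
    show ?thesis
    proof (cases "x 0 = y 0")
      case True
      then show ?thesis using dist_cases(3)[of x z] dist_cases(3)[of y z] xyz False nn by simp
    next
      case xy0: False
      show ?thesis
      proof (cases "y 0 = z 0")
        case True
        then show ?thesis using dist_cases(3)[of x z] dist_cases(3)[of x y] xyz False nn by simp
      next
        case yz0: False
        obtain e1 e2 e3 where "dn e1 (x 0)" "dn e2 (y 0)" "dn e3 (z 0)" using ps_dn0 xyz by metis
        then have d: "dn (max e1 (max e2 e3)) (x 0)" "dn (max e1 (max e2 e3)) (y 0)" "dn (max e1 (max e2 e3)) (z 0)"
          using dn_mono by (meson max.cobounded1 max.cobounded2 order_trans)+
        have "dn (max e1 (max e2 e3)) (x 0 - y 0)" "dn (max e1 (max e2 e3)) (y 0 - z 0)"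
          using d dn_add[of _ "x 0" "- y 0"] dn_add[of _ "y 0" "- z 0"] dn_mult[of 0 "-1"]
          by (metis add_0 diff_conv_add_uminus dn_int mult_minus1 of_int_minus of_int_1)+
        then have "den (x 0 - y 0 + (y 0 - z 0)) \<le> max (den (x 0 - y 0)) (den (y 0 - z 0))"
          by (rule den_add_le)
        then have "real_of_int (den (x 0 - z 0)) \<le> real_of_int (den (x 0 - y 0)) + real_of_int (den (y 0 - z 0))"
          using den_pos[of "x 0 - y 0"] den_pos[of "y 0 - z 0"] by simp
        then show ?thesis using dist_cases(3) xyz False xy0 yz0 by simp
      qed
    qed
  qed
qed

lemma Metric_padic: "Metric_space ps (padic_dist p)"
proof
  fix x y z
  show "0 \<le> padic_dist p x y" unfolding padic_dist_def by (rule abs_nonneg)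
  show "padic_dist p x y = padic_dist p y x" by (rule dist_commute)
  show "x \<in> ps \<Longrightarrow> y \<in> ps \<Longrightarrow> padic_dist p x y = 0 \<longleftrightarrow> x = y"
  proof -
    assume xy: "x \<in> ps" "y \<in> ps"
    show ?thesis
    proof (cases "x = y")
      case False
      have "padic_dist p x y > 0"
      proof (cases "x 0 = y 0")
        case True
        then show ?thesis using dist_cases(2)[OF xy False True] powr_pos by simp
      next
        case ne: False
        then show ?thesis using dist_cases(3)[OF xy ne] den_pos[of "x 0 - y 0"] by simp
      qed
      then show ?thesis using False by simp
    next
      case True
      then show ?thesis using dist_cases(1)[OF xy] by simp
    qed
  qed
  show "x \<in> ps \<Longrightarrow> y \<in> ps \<Longrightarrow> z \<in> ps \<Longrightarrow> padic_dist p x z \<le> padic_dist p x y + padic_dist p y z"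
    by (rule dist_triangle)
qed

end

sublocale padic \<subseteq> PM: Metric_space "padic_set p" "padic_dist p" by (rule Metric_padic)

context padic begin

lemma top_ps: "topspace (padic_top p) = ps" unfolding padic_top_def by simp

lemma lv_open: "openin (padic_top p) {y' \<in> ps. y' N = y N}"
  unfolding padic_top_def PM.openin_mtopology
proof (intro conjI allI impI)
  show "{y' \<in> ps. y' N = y N} \<subseteq> ps" by auto
  fix z assume z: "z \<in> {y' \<in> ps. y' N = y N}"
  show "\<exists>r>0. PM.mball z r \<subseteq> {y' \<in> ps. y' N = y N}"
  proof (intro exI conjI)
    show "(0::real) < 1 / real p ^ N" using p2 by simp
    show "PM.mball z (1 / real p ^ N) \<subseteq> {y' \<in> ps. y' N = y N}"
    proof
      fix y' assume "y' \<in> PM.mball z (1 / real p ^ N)"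
      then have "z \<in> ps" "y' \<in> ps" "padic_dist p z y' < 1 / real p ^ N" by auto
      then have "z N = y' N" using dist_small_iff(1) by blast
      then show "y' \<in> {y' \<in> ps. y' N = y N}" using z \<open>y' \<in> ps\<close> by simp
    qed
  qed
qed

lemma lv_inside: "openin (padic_top p) V \<Longrightarrow> y \<in> V \<Longrightarrow> \<exists>N. {y' \<in> ps. y' N = y N} \<subseteq> V"
proof -
  assume V: "openin (padic_top p) V" and y: "y \<in> V"
  then obtain r where r: "r > 0" "PM.mball y r \<subseteq> V" "V \<subseteq> ps"
    unfolding padic_top_def PM.openin_mtopology by blast
  have "1 / real p < 1" using p2 by simp
  then obtain N where N: "(1 / real p) ^ N < r" using real_arch_pow_inv r(1) by blast
  have "{y' \<in> ps. y' N = y N} \<subseteq> PM.mball y r"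
  proof
    fix y' assume "y' \<in> {y' \<in> ps. y' N = y N}"
    then have y': "y' \<in> ps" "y N = y' N" by auto
    have "y \<in> ps" using y r(3) by blast
    then have "padic_dist p y y' \<le> 1 / real p ^ N" using dist_small_iff(2)[of y y' N] y' by blast
    also have "\<dots> < r" using N by (simp add: power_one_over)
    finally show "y' \<in> PM.mball y r" using y r(3) y' by auto
  qed
  then show ?thesis using r by blast
qed

definition fac :: "'x set \<Rightarrow> 'x \<Rightarrow> (nat \<Rightarrow> rat) topology" where
  "fac P = (\<lambda>i. if i \<in> P then padic_top p else subtopology (padic_top p) (Zp p))"

definition sp :: "'x set \<Rightarrow> 'x \<Rightarrow> (nat \<Rightarrow> rat) set" where
  "sp P i = (if i \<in> P then ps else Zp p)"

lemma sp_ps: "sp P i \<subseteq> ps" unfolding sp_def using Zp_ps by auto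

lemma block_fac: "block_top p P = product_topology (fac P) UNIV"
  unfolding block_top_def fac_def ..

lemma top_fac: "topspace (fac P i) = sp P i"
  unfolding fac_def sp_def using top_ps Zp_ps by auto

lemma fac_open: "openin (fac P i) {y' \<in> sp P i. y' N = y N}"
proof (cases "i \<in> P")
  case True then show ?thesis unfolding fac_def sp_def using lv_open by simp
next
  case False
  have "{y' \<in> sp P i. y' N = y N} = {y' \<in> ps. y' N = y N} \<inter> Zp p"
    unfolding sp_def using False Zp_ps by auto
  then show ?thesis unfolding fac_def using False lv_open by (auto simp: openin_subtopology)
qed

lemma fac_inside: "openin (fac P i) V \<Longrightarrow> y \<in> V \<Longrightarrow> \<exists>N. {y' \<in> sp P i. y' N = y N} \<subseteq> V"
proof (cases "i \<in> P")
  case True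
  assume "openin (fac P i) V" "y \<in> V"
  then show ?thesis using True lv_inside unfolding fac_def sp_def by simp
next
  case False
  assume "openin (fac P i) V" "y \<in> V"
  then obtain T where T: "openin (padic_top p) T" "V = T \<inter> Zp p"
    using False unfolding fac_def by (auto simp: openin_subtopology)
  then obtain N where "{y' \<in> ps. y' N = y N} \<subseteq> T" using lv_inside \<open>y \<in> V\<close> by blast
  then have "{y' \<in> sp P i. y' N = y N} \<subseteq> V" using T False Zp_ps unfolding sp_def by auto
  then show ?thesis by blast
qed

definition TP :: "'x set \<Rightarrow> ('x \<Rightarrow> nat \<Rightarrow> rat) set" where
  "TP P = {\<xi>. \<forall>i. \<xi> i \<in> sp P i}"

lemma top_block: "topspace (block_top p P) = TP P"
  unfolding block_fac topspace_product_topology top_fac TP_def PiE_UNIV_domain by (auto simp: Pi_def)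

lemma block_open_iff: "openin (block_top p P) W \<longleftrightarrow>
   W \<subseteq> TP P \<and> (\<forall>\<xi>\<in>W. \<exists>H N. finite H \<and> {\<xi>' \<in> TP P. \<forall>j\<in>H. \<xi>' j N = \<xi> j N} \<subseteq> W)"
proof
  assume W: "openin (block_top p P) W"
  show "W \<subseteq> TP P \<and> (\<forall>\<xi>\<in>W. \<exists>H N. finite H \<and> {\<xi>' \<in> TP P. \<forall>j\<in>H. \<xi>' j N = \<xi> j N} \<subseteq> W)"
  proof (intro conjI ballI)
    show "W \<subseteq> TP P" using openin_subset[OF W] by (simp add: top_block)
    fix \<xi> assume \<xi>: "\<xi> \<in> W"
    have "\<forall>x\<in>W. \<exists>U. finite {i \<in> UNIV. U i \<noteq> topspace (fac P i)} \<and> (\<forall>i\<in>UNIV. openin (fac P i) (U i)) \<and>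
             x \<in> PiE UNIV U \<and> PiE UNIV U \<subseteq> W"
      using W unfolding block_fac openin_product_topology_alt .
    from bspec[OF this \<xi>] obtain U where U: "finite {i \<in> UNIV. U i \<noteq> topspace (fac P i)}" "\<forall>i\<in>UNIV. openin (fac P i) (U i)"
      "\<xi> \<in> PiE UNIV U" "PiE UNIV U \<subseteq> W"
      by blast
    define H where "H = {i \<in> UNIV. U i \<noteq> topspace (fac P i)}"
    have xiU: "\<xi> i \<in> U i" for i using U(3) by (auto simp: PiE_iff)
    have "\<forall>i\<in>H. \<exists>N. {y' \<in> sp P i. y' N = \<xi> i N} \<subseteq> U i"
    proof
      fix i assume "i \<in> H"
      show "\<exists>N. {y' \<in> sp P i. y' N = \<xi> i N} \<subseteq> U i"
        using fac_inside[of P i "U i" "\<xi> i"] U(2) xiU by blast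
    qed
    from bchoice[OF this] obtain Nf where Nf0: "\<forall>i\<in>H. {y' \<in> sp P i. y' (Nf i) = \<xi> i (Nf i)} \<subseteq> U i"
      by blast
    then have Nf: "\<And>i. i \<in> H \<Longrightarrow> {y' \<in> sp P i. y' (Nf i) = \<xi> i (Nf i)} \<subseteq> U i" by blast
    define N where "N = (\<Sum>i\<in>H. Nf i)"
    have fin: "finite H" using U(1) H_def by simp
    have NfN: "i \<in> H \<Longrightarrow> Nf i \<le> N" for i unfolding N_def using fin by (simp add: member_le_sum)
    have "{\<xi>' \<in> TP P. \<forall>j\<in>H. \<xi>' j N = \<xi> j N} \<subseteq> PiE UNIV U"
    proof
      fix \<xi>' assume a: "\<xi>' \<in> {\<xi>' \<in> TP P. \<forall>j\<in>H. \<xi>' j N = \<xi> j N}"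
      have "\<xi>' i \<in> U i" for i
      proof (cases "i \<in> H")
        case True
        have "\<xi> i \<in> U i" by (rule xiU)
        moreover have "U i \<subseteq> topspace (fac P i)" using openin_subset[of "fac P i" "U i"] U(2) by blast
        ultimately have "\<xi> i \<in> sp P i" unfolding top_fac by blast
        moreover have "\<xi>' i \<in> sp P i" using a unfolding TP_def by auto
        moreover have "\<xi>' i N = \<xi> i N" using a True by blast
        moreover have "Nf i \<le> N" using NfN[OF True] .
        ultimately have "\<xi>' i (Nf i) = \<xi> i (Nf i)"
          using ps_eq_le[of "\<xi>' i" "\<xi> i" N "Nf i"] sp_ps[of P i] by blast
        then show ?thesis using Nf[OF True] \<open>\<xi>' i \<in> sp P i\<close> by blast
      next
        case False
        then have "U i = topspace (fac P i)" unfolding H_def by blast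
        then have "U i = sp P i" by (simp add: top_fac)
        then show ?thesis using a unfolding TP_def by auto
      qed
      then show "\<xi>' \<in> PiE UNIV U" unfolding PiE_UNIV_domain by (simp add: Pi_iff)
    qed
    then have "{\<xi>' \<in> TP P. \<forall>j\<in>H. \<xi>' j N = \<xi> j N} \<subseteq> W" using U(4) by (rule subset_trans)
    then show "\<exists>H N. finite H \<and> {\<xi>' \<in> TP P. \<forall>j\<in>H. \<xi>' j N = \<xi> j N} \<subseteq> W"
      using fin by (intro exI conjI)
  qed
next
  assume R: "W \<subseteq> TP P \<and> (\<forall>\<xi>\<in>W. \<exists>H N. finite H \<and> {\<xi>' \<in> TP P. \<forall>j\<in>H. \<xi>' j N = \<xi> j N} \<subseteq> W)"
  show "openin (block_top p P) W"
    unfolding block_fac openin_product_topology_alt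
  proof
    fix \<xi> assume \<xi>: "\<xi> \<in> W"
    have "\<exists>H N. finite H \<and> {\<xi>' \<in> TP P. \<forall>j\<in>H. \<xi>' j N = \<xi> j N} \<subseteq> W" using bspec[OF conjunct2[OF R] \<xi>] .
    then obtain H N where HN: "finite H" "{\<xi>' \<in> TP P. \<forall>j\<in>H. \<xi>' j N = \<xi> j N} \<subseteq> W" by blast
    define U where "U = (\<lambda>i. if i \<in> H then {y' \<in> sp P i. y' N = \<xi> i N} else sp P i)"
    have "{i \<in> UNIV. U i \<noteq> topspace (fac P i)} \<subseteq> H" unfolding U_def top_fac by auto
    then have 1: "finite {i \<in> UNIV. U i \<noteq> topspace (fac P i)}" using HN(1) finite_subset by blast
    have 2: "\<forall>i\<in>UNIV. openin (fac P i) (U i)"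
    proof
      fix i
      show "openin (fac P i) (U i)"
      proof (cases "i \<in> H")
        case True then show ?thesis unfolding U_def using fac_open by simp
      next
        case False then show ?thesis unfolding U_def using openin_topspace[of "fac P i"] by (simp add: top_fac)
      qed
    qed
    have \<xi>T: "\<xi> \<in> TP P" using \<xi> R by blast
    have 3: "\<xi> \<in> PiE UNIV U" using \<xi>T unfolding U_def TP_def PiE_UNIV_domain by (simp add: Pi_iff)
    have "PiE UNIV U = {\<xi>' \<in> TP P. \<forall>j\<in>H. \<xi>' j N = \<xi> j N}"
      unfolding U_def TP_def PiE_UNIV_domain by (auto simp: Pi_iff split: if_splits)
    then have 4: "PiE UNIV U \<subseteq> W" using HN(2) by simp
    show "\<exists>U. finite {i \<in> UNIV. U i \<noteq> topspace (fac P i)} \<and> (\<forall>i\<in>UNIV. openin (fac P i) (U i)) \<and>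
             \<xi> \<in> PiE UNIV U \<and> PiE UNIV U \<subseteq> W"
      using 1 2 3 4 by (intro exI[of _ U] conjI)
  qed
qed

lemma TP_QpX: "finite P \<Longrightarrow> TP P \<subseteq> QpX p"
proof
  fix \<xi> assume P: "finite P" and "\<xi> \<in> TP P"
  then have a: "\<forall>i. \<xi> i \<in> sp P i" unfolding TP_def by auto
  then have "\<forall>i. \<xi> i \<in> ps" using sp_ps by fast
  moreover have "{i. \<xi> i \<notin> Zp p} \<subseteq> P" using a unfolding sp_def by (auto split: if_splits)
  then have "finite {i. \<xi> i \<notin> Zp p}" using P finite_subset by blast
  ultimately show "\<xi> \<in> QpX p" unfolding QpX_def by simp
qed

lemma tau_open_iff: "tau_open p A \<longleftrightarrow> A \<subseteq> QpX p \<and>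
   (\<forall>P. finite P \<longrightarrow> (\<forall>\<xi>\<in>A \<inter> TP P. \<exists>H N. finite H \<and> {\<xi>' \<in> TP P. \<forall>j\<in>H. \<xi>' j N = \<xi> j N} \<subseteq> A))"
proof -
  have e: "{\<xi>' \<in> TP P. \<forall>j\<in>H. \<xi>' j N = \<xi> j N} \<subseteq> A \<inter> TP P \<longleftrightarrow> {\<xi>' \<in> TP P. \<forall>j\<in>H. \<xi>' j N = \<xi> j N} \<subseteq> A"
    for P H N \<xi> by blast
  show ?thesis unfolding tau_open_def top_block block_open_iff e by simp
qed



lemma add_lvl: "padic_add p x y n = rmod (x n + y n) (of_nat p ^ n)"
  unfolding padic_add_def by simp

lemma dn_common: "x \<in> ps \<Longrightarrow> y \<in> ps \<Longrightarrow> \<exists>e. dn e (x 0) \<and> dn e (y 0)"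
proof -
  assume "x \<in> ps" "y \<in> ps"
  then obtain e1 e2 where "dn e1 (x 0)" "dn e2 (y 0)" using ps_dn0 by blast
  then have "dn (max e1 e2) (x 0)" "dn (max e1 e2) (y 0)" using dn_mono by auto
  then show ?thesis by blast
qed

lemma add_ps: "x \<in> ps \<Longrightarrow> y \<in> ps \<Longrightarrow> padic_add p x y \<in> ps"
proof (rule ps_I)
  assume xy: "x \<in> ps" "y \<in> ps"
  then obtain e where e: "dn e (x 0)" "dn e (y 0)" using dn_common by blast
  fix n
  show "\<exists>e. dn e (padic_add p x y n)" unfolding add_lvl
    using dn_rmod dn_add ps_dn xy e by blast
  show "0 \<le> padic_add p x y n" unfolding add_lvl by (rule rmod_ge)
  show "padic_add p x y n < of_nat p ^ n" unfolding add_lvl by (rule rmod_lt)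
  have "cg (Suc n) (padic_add p x y (Suc n)) (x (Suc n) + y (Suc n))" unfolding add_lvl by (rule cg_rmod)
  then have 1: "cg n (padic_add p x y (Suc n)) (x (Suc n) + y (Suc n))" using cg_mono by simp
  have 2: "cg n (x (Suc n) + y (Suc n)) (x n + y n)" using ps_D(4) xy cg_add by blast
  have 3: "cg n (x n + y n) (padic_add p x y n)" unfolding add_lvl by (rule cg_rmod')
  show "cg n (padic_add p x y (Suc n)) (padic_add p x y n)" using 1 2 3 cg_trans by blast
qed

lemma smul_lvl: "padic_smul p c y n = rmod (c (n + nat (den (y 0))) * y n) (of_nat p ^ n)"
  unfolding padic_smul_def den_def by simp

lemma SM:
  assumes y: "y \<in> ps" and c: "c \<in> Zp p" and dd: "dn dd (y 0)" and m: "n + dd \<le> m" and m': "n \<le> m'"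
  shows "cg n (padic_smul p c y n) (c m * y m')"
proof -
  define D where "D = nat (den (y 0))"
  define k where "k = min D dd"
  have dD: "dn D (y 0)" unfolding D_def using dn_den_self dd by blast
  have dk: "dn k (y 0)" unfolding k_def using dD dd by (simp add: min_def)
  then have dkn: "dn k (y n)" using ps_dn y by blast
  have cps: "c \<in> ps" using c Zp_ps by blast
  define a0 where "a0 = min (n + D) m"
  have "cg a0 (c (n + D)) (c a0)" unfolding a0_def using ps_cg cps by simp
  moreover have "cg a0 (c m) (c a0)" unfolding a0_def using ps_cg cps by simp
  ultimately have "cg a0 (c (n + D)) (c m)" using cg_trans cg_sym by blast
  moreover have "n + k \<le> a0" unfolding a0_def k_def using m by simp
  ultimately have "cg (n + k) (c (n + D)) (c m)" using cg_mono by blast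
  then have 1: "cg n (y n * c (n + D)) (y n * c m)" using dkn by (rule cg_mult_dn)
  have "cg (n + 0) (y n) (y m')" using ps_cg[OF y m'] cg_sym by simp
  then have 2: "cg n (c m * y n) (c m * y m')" using Zp_dn[OF c] by (rule cg_mult_dn)
  have 3: "cg n (padic_smul p c y n) (c (n + D) * y n)" unfolding smul_lvl D_def by (rule cg_rmod)
  show ?thesis using 1 2 3 cg_trans by (simp add: mult.commute)
qed

lemma smul_ps: "c \<in> Zp p \<Longrightarrow> y \<in> ps \<Longrightarrow> padic_smul p c y \<in> ps"
proof (rule ps_I)
  assume c: "c \<in> Zp p" and y: "y \<in> ps"
  obtain e where e: "dn e (y 0)" using ps_dn0 y by blast
  fix n
  have "dn (0 + e) (c (n + nat (den (y 0))) * y n)" using Zp_dn[OF c] ps_dn[OF y e] by (rule dn_mult)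
  then show "\<exists>e. dn e (padic_smul p c y n)" unfolding smul_lvl using dn_rmod by auto
  show "0 \<le> padic_smul p c y n" unfolding smul_lvl by (rule rmod_ge)
  show "padic_smul p c y n < of_nat p ^ n" unfolding smul_lvl by (rule rmod_lt)
  have 1: "cg (Suc n) (padic_smul p c y (Suc n)) (c (Suc n + e) * y (Suc n))"
    using SM[OF y c e] by simp
  have 2: "cg n (padic_smul p c y n) (c (Suc n + e) * y (Suc n))"
    using SM[OF y c e] by simp
  show "cg n (padic_smul p c y (Suc n)) (padic_smul p c y n)"
    using cg_mono[OF 1] 2 cg_trans cg_sym by (meson le_SucI order_refl)
qed

lemma abs_dist: "x \<in> ps \<Longrightarrow> padic_abs p x = padic_dist p x padic_zero"
proof -
  assume x: "x \<in> ps"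
  have "padic_add p x (padic_neg p padic_zero) = x"
  proof
    fix n
    show "padic_add p x (padic_neg p padic_zero) n = x n"
      unfolding diff_lvl padic_zero_def using rmod_id ps_D(1,2) x by simp
  qed
  then show ?thesis unfolding padic_dist_def by simp
qed

lemma lvl_zero: "x \<in> ps \<Longrightarrow> x m = 0 \<Longrightarrow> padic_abs p x \<le> 1 / real p ^ m"
  using abs_dist dist_small_iff(2)[of x padic_zero m] zero_ps unfolding padic_zero_def by simp

lemma lvl_nz: "x \<in> ps \<Longrightarrow> x m \<noteq> 0 \<Longrightarrow> padic_abs p x \<ge> 1 / real p ^ m"
  using abs_dist dist_small_iff(1)[of x padic_zero m] zero_ps unfolding padic_zero_def by force

lemma small_pow: "(e::real) > 0 \<Longrightarrow> \<exists>n. 1 / real p ^ n < e"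
proof -
  assume "e > 0"
  moreover have "1 / real p < 1" using p2 by simp
  ultimately obtain n where "(1 / real p) ^ n < e" using real_arch_pow_inv by blast
  then show ?thesis by (auto simp: power_one_over)
qed

lemma finite_dn: "finite F \<Longrightarrow> (\<And>x. x \<in> F \<Longrightarrow> \<exists>e. dn e (g x)) \<Longrightarrow> \<exists>e. \<forall>x\<in>F. dn e (g x)"
proof (induction F rule: finite_induct)
  case (insert a F)
  then obtain e1 where e1: "\<forall>x\<in>F. dn e1 (g x)" by blast
  obtain e2 where e2: "dn e2 (g a)" using insert by blast
  have "\<forall>x\<in>insert a F. dn (max e1 e2) (g x)" using e1 e2 dn_mono by auto
  then show ?case by blast
qed simp


definition good :: "('x \<Rightarrow> 'x \<Rightarrow> nat \<Rightarrow> rat) \<Rightarrow> bool" where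
  "good M \<longleftrightarrow> (\<forall>i j. M i j \<in> ps) \<and> finite {(i, j). M i j \<notin> Zp p}
     \<and> (\<forall>k. \<forall>\<epsilon>::real. \<epsilon> > 0 \<longrightarrow> finite {i. padic_abs p (M i k) > \<epsilon>} \<and> finite {j. padic_abs p (M k j) > \<epsilon>})"

definition Sset :: "('x \<Rightarrow> 'x \<Rightarrow> nat \<Rightarrow> rat) \<Rightarrow> 'x \<Rightarrow> nat \<Rightarrow> 'x set" where
  "Sset M i m = {j. M i j m \<noteq> 0}"

definition Tsum :: "('x \<Rightarrow> 'x \<Rightarrow> nat \<Rightarrow> rat) \<Rightarrow> ('x \<Rightarrow> nat \<Rightarrow> rat) \<Rightarrow> 'x \<Rightarrow> nat \<Rightarrow> rat" where
  "Tsum M \<xi> i m = (\<Sum>j\<in>Sset M i m. M i j m * \<xi> j m)"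

definition valid :: "('x \<Rightarrow> 'x \<Rightarrow> nat \<Rightarrow> rat) \<Rightarrow> ('x \<Rightarrow> nat \<Rightarrow> rat) \<Rightarrow> nat \<Rightarrow> bool" where
  "valid M \<xi> e \<longleftrightarrow> (\<forall>i j. dn e (M i j 0)) \<and> (\<forall>j. dn e (\<xi> j 0))"

definition Aop :: "('x \<Rightarrow> 'x \<Rightarrow> nat \<Rightarrow> rat) \<Rightarrow> ('x \<Rightarrow> nat \<Rightarrow> rat) \<Rightarrow> 'x \<Rightarrow> nat \<Rightarrow> rat" where
  "Aop M \<xi> = (\<lambda>i n. rmod (Tsum M \<xi> i (n + (LEAST e. valid M \<xi> e))) (of_nat p ^ n))"

lemma good_ps: "good M \<Longrightarrow> M i j \<in> ps" unfolding good_def by blast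

lemma good_row: "good M \<Longrightarrow> finite (Sset M i m)"
proof -
  assume g: "good M"
  have "Sset M i m \<subseteq> {j. padic_abs p (M i j) > 1 / real p ^ Suc m}"
  proof
    fix j assume "j \<in> Sset M i m"
    then have "padic_abs p (M i j) \<ge> 1 / real p ^ m" using lvl_nz good_ps[OF g] unfolding Sset_def by blast
    moreover have "1 / real p ^ Suc m < 1 / real p ^ m" using p2 by (simp add: frac_less2)
    ultimately show "j \<in> {j. padic_abs p (M i j) > 1 / real p ^ Suc m}" by simp
  qed
  moreover have "finite {j. padic_abs p (M i j) > 1 / real p ^ Suc m}"
    using g p2 unfolding good_def by simp
  ultimately show ?thesis using finite_subset by blast
qed

lemma good_col: "good M \<Longrightarrow> finite {i. M i j m \<noteq> 0}"
proof -
  assume g: "good M"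
  have "{i. M i j m \<noteq> 0} \<subseteq> {i. padic_abs p (M i j) > 1 / real p ^ Suc m}"
  proof
    fix i assume "i \<in> {i. M i j m \<noteq> 0}"
    then have "padic_abs p (M i j) \<ge> 1 / real p ^ m" using lvl_nz good_ps[OF g] by blast
    moreover have "1 / real p ^ Suc m < 1 / real p ^ m" using p2 by (simp add: frac_less2)
    ultimately show "i \<in> {i. padic_abs p (M i j) > 1 / real p ^ Suc m}" by simp
  qed
  moreover have "finite {i. padic_abs p (M i j) > 1 / real p ^ Suc m}"
    using g p2 unfolding good_def by simp
  ultimately show ?thesis using finite_subset by blast
qed

lemma good_fin: "good M \<Longrightarrow> finite {(i, j). M i j \<notin> Zp p}" unfolding good_def by blast

lemma good_dn: "good M \<Longrightarrow> \<exists>e. \<forall>i j. dn e (M i j 0)"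
proof -
  assume g: "good M"
  let ?F = "{(i, j). M i j \<notin> Zp p}"
  have "\<exists>e. \<forall>x\<in>?F. dn e ((\<lambda>(i, j). M i j 0) x)"
    using finite_dn[OF good_fin[OF g], of "\<lambda>(i, j). M i j 0"] ps_dn0 good_ps[OF g] by auto
  then obtain e where e: "\<forall>x\<in>?F. dn e ((\<lambda>(i, j). M i j 0) x)" by blast
  have "dn e (M i j 0)" for i j
  proof (cases "M i j \<in> Zp p")
    case True then show ?thesis unfolding Zp_iff by simp
  next
    case False then show ?thesis using e by auto
  qed
  then show ?thesis by blast
qed

lemma QpX_dn: "\<xi> \<in> QpX p \<Longrightarrow> \<exists>e. \<forall>j. dn e (\<xi> j 0)"
proof -
  assume x: "\<xi> \<in> QpX p"
  then have fin: "finite {j. \<xi> j \<notin> Zp p}" and ps: "\<And>j. \<xi> j \<in> ps" unfolding QpX_def by auto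
  obtain e where e: "\<forall>j\<in>{j. \<xi> j \<notin> Zp p}. dn e (\<xi> j 0)"
    using finite_dn[OF fin, of "\<lambda>j. \<xi> j 0"] ps_dn0 ps by blast
  have "dn e (\<xi> j 0)" for j
  proof (cases "\<xi> j \<in> Zp p")
    case True then show ?thesis unfolding Zp_iff by simp
  next
    case False then show ?thesis using e by auto
  qed
  then show ?thesis by blast
qed

lemma valid_ex: "good M \<Longrightarrow> \<xi> \<in> QpX p \<Longrightarrow> \<exists>e. valid M \<xi> e"
proof -
  assume "good M" "\<xi> \<in> QpX p"
  then obtain e1 e2 where "\<forall>i j. dn e1 (M i j 0)" "\<forall>j. dn e2 (\<xi> j 0)" using good_dn QpX_dn by metis
  then have "valid M \<xi> (max e1 e2)" unfolding valid_def using dn_mono by (meson max.cobounded1 max.cobounded2)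
  then show ?thesis by blast
qed

lemma valid_mono: "valid M \<xi> e \<Longrightarrow> e \<le> e' \<Longrightarrow> valid M \<xi> e'"
  unfolding valid_def using dn_mono by blast

lemma Sset_mono: "good M \<Longrightarrow> m \<le> m' \<Longrightarrow> Sset M i m \<subseteq> Sset M i m'"
proof
  fix j assume g: "good M" and mm: "m \<le> m'" and j: "j \<in> Sset M i m"
  show "j \<in> Sset M i m'"
  proof (rule ccontr)
    assume "j \<notin> Sset M i m'"
    then have "M i j m' = 0" unfolding Sset_def by simp
    then have "M i j m = 0" using ps_rmod[OF good_ps[OF g] mm] by simp
    then show False using j unfolding Sset_def by simp
  qed
qed

lemma Tsum_cg:
  assumes g: "good M" and xps: "\<And>j. \<xi> j \<in> ps" and v: "valid M \<xi> e"
    and m: "n + e \<le> m" and mm: "m \<le> m'"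
  shows "cg n (Tsum M \<xi> i m') (Tsum M \<xi> i m)"
proof -
  have dM: "dn e (M i j k)" for j k using v ps_dn good_ps[OF g] unfolding valid_def by blast
  have dx: "dn e (\<xi> j k)" for j k using v ps_dn xps unfolding valid_def by blast
  have tm: "cg n (M i j m' * \<xi> j m') (M i j m * \<xi> j m)" for j
  proof -
    have "cg m (M i j m') (M i j m)" using ps_cg[OF good_ps[OF g] mm] .
    then have 1: "cg n (M i j m' * \<xi> j m') (M i j m * \<xi> j m')" using dx m by (rule cg_mult_dn2)
    have "cg m (\<xi> j m') (\<xi> j m)" using ps_cg[OF xps mm] .
    then have 2: "cg n (M i j m * \<xi> j m') (M i j m * \<xi> j m)" using dM m by (rule cg_mult_dn')
    show ?thesis using 1 2 by (rule cg_trans)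
  qed
  have "cg n (Tsum M \<xi> i m') (\<Sum>j\<in>Sset M i m'. M i j m * \<xi> j m)"
    unfolding Tsum_def using tm by (rule cg_sum)
  moreover have "(\<Sum>j\<in>Sset M i m'. M i j m * \<xi> j m) = Tsum M \<xi> i m"
    unfolding Tsum_def
  proof (rule sum.mono_neutral_right)
    show "finite (Sset M i m')" using good_row[OF g] .
    show "Sset M i m \<subseteq> Sset M i m'" using Sset_mono[OF g] m mm by simp
    show "\<forall>j\<in>Sset M i m' - Sset M i m. M i j m * \<xi> j m = 0" unfolding Sset_def by simp
  qed
  ultimately show ?thesis by simp
qed

lemma Aop_eq:
  assumes g: "good M" and xps: "\<And>j. \<xi> j \<in> ps" and v: "valid M \<xi> e" and m: "n + e \<le> m"
  shows "Aop M \<xi> i n = rmod (Tsum M \<xi> i m) (of_nat p ^ n)"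
proof -
  define E where "E = (LEAST e. valid M \<xi> e)"
  have vE: "valid M \<xi> E" unfolding E_def using v by (rule LeastI)
  have "E \<le> e" unfolding E_def using v by (rule Least_le)
  then have "n + E \<le> m" using m by simp
  then have "cg n (Tsum M \<xi> i m) (Tsum M \<xi> i (n + E))" using Tsum_cg[OF g xps vE] by simp
  then have "rmod (Tsum M \<xi> i m) (of_nat p ^ n) = rmod (Tsum M \<xi> i (n + E)) (of_nat p ^ n)"
    by (rule rmod_cg_eq)
  then show ?thesis unfolding Aop_def E_def by simp
qed

lemma Tsum_dn:
  assumes g: "good M" and xps: "\<And>j. \<xi> j \<in> ps" and v: "valid M \<xi> e"
  shows "dn (e + e) (Tsum M \<xi> i m)"
  unfolding Tsum_def
proof (rule dn_sum)
  fix j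
  have "dn e (M i j m)" using v ps_dn good_ps[OF g] unfolding valid_def by blast
  moreover have "dn e (\<xi> j m)" using v ps_dn xps unfolding valid_def by blast
  ultimately show "dn (e + e) (M i j m * \<xi> j m)" by (rule dn_mult)
qed

lemma Aop_ps:
  assumes g: "good M" and xps: "\<And>j. \<xi> j \<in> ps" and v: "valid M \<xi> e"
  shows "Aop M \<xi> i \<in> ps"
proof (rule ps_I)
  fix n
  have eq: "Aop M \<xi> i n = rmod (Tsum M \<xi> i (n + e)) (of_nat p ^ n)" by (rule Aop_eq[OF g xps v]) simp
  show "\<exists>e. dn e (Aop M \<xi> i n)" unfolding eq using dn_rmod Tsum_dn[OF g xps v] by blast
  show "0 \<le> Aop M \<xi> i n" unfolding eq by (rule rmod_ge)
  show "Aop M \<xi> i n < of_nat p ^ n" unfolding eq by (rule rmod_lt)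
  have e1: "Aop M \<xi> i (Suc n) = rmod (Tsum M \<xi> i (Suc n + e)) (of_nat p ^ Suc n)"
    by (rule Aop_eq[OF g xps v]) simp
  have e2: "Aop M \<xi> i n = rmod (Tsum M \<xi> i (Suc n + e)) (of_nat p ^ n)"
    by (rule Aop_eq[OF g xps v]) simp
  have 1: "cg n (Aop M \<xi> i (Suc n)) (Tsum M \<xi> i (Suc n + e))" unfolding e1 using cg_rmod cg_mono by (meson le_SucI order_refl)
  have 2: "cg n (Tsum M \<xi> i (Suc n + e)) (Aop M \<xi> i n)" unfolding e2 by (rule cg_rmod')
  show "cg n (Aop M \<xi> i (Suc n)) (Aop M \<xi> i n)" using 1 2 by (rule cg_trans)
qed

lemma Aop_Zp:
  assumes g: "good M" and xps: "\<And>j. \<xi> j \<in> ps" and v: "valid M \<xi> e"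
    and row: "\<And>j. M i j \<in> Zp p" and col: "\<And>j. M i j e \<noteq> 0 \<Longrightarrow> \<xi> j \<in> Zp p"
  shows "Aop M \<xi> i \<in> Zp p"
proof -
  have eq: "Aop M \<xi> i 0 = rmod (Tsum M \<xi> i e) (of_nat p ^ 0)" by (rule Aop_eq[OF g xps v]) simp
  have "dn 0 (Tsum M \<xi> i e)" unfolding Tsum_def
  proof (rule dn_sum)
    fix j assume "j \<in> Sset M i e"
    then have "\<xi> j \<in> Zp p" using col unfolding Sset_def by blast
    then have "dn 0 (\<xi> j e)" by (rule Zp_dn)
    moreover have "dn 0 (M i j e)" using Zp_dn row by blast
    ultimately show "dn 0 (M i j e * \<xi> j e)" using dn_mult by fastforce
  qed
  then have "cg 0 (Tsum M \<xi> i e) 0" using cg0_int by blast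
  then have "Aop M \<xi> i 0 = 0" unfolding eq by (rule rmod_eq_0)
  then show ?thesis using Aop_ps[OF g xps v] Zp_iff by blast
qed


lemma QpX_ps: "\<xi> \<in> QpX p \<Longrightarrow> \<xi> j \<in> ps" unfolding QpX_def by blast

lemma Aop_QpX:
  assumes g: "good M" and x: "\<xi> \<in> QpX p"
  shows "Aop M \<xi> \<in> QpX p"
proof -
  obtain e where v: "valid M \<xi> e" using valid_ex[OF g x] by blast
  have xps: "\<And>j. \<xi> j \<in> ps" using QpX_ps[OF x] .
  define R where "R = fst ` {(i, j). M i j \<notin> Zp p}"
  define J where "J = {j. \<xi> j \<notin> Zp p}"
  define C where "C = (\<Union>j\<in>J. {i. M i j e \<noteq> 0})"
  have fR: "finite R" unfolding R_def using good_fin[OF g] by simp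
  have fJ: "finite J" unfolding J_def using x unfolding QpX_def by blast
  have fC: "finite C" unfolding C_def using fJ good_col[OF g] by blast
  have "{i. Aop M \<xi> i \<notin> Zp p} \<subseteq> R \<union> C"
  proof
    fix i assume i: "i \<in> {i. Aop M \<xi> i \<notin> Zp p}"
    show "i \<in> R \<union> C"
    proof (rule ccontr)
      assume n: "i \<notin> R \<union> C"
      have row: "M i j \<in> Zp p" for j
      proof (rule ccontr)
        assume "M i j \<notin> Zp p"
        then have "(i, j) \<in> {(i, j). M i j \<notin> Zp p}" by simp
        then have "i \<in> R" unfolding R_def by (metis fst_conv image_eqI)
        then show False using n by blast
      qed
      have col: "\<xi> j \<in> Zp p" if "M i j e \<noteq> 0" for j
      proof (rule ccontr)
        assume "\<xi> j \<notin> Zp p"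
        then have "j \<in> J" unfolding J_def by simp
        then have "i \<in> C" unfolding C_def using that by blast
        then show False using n by blast
      qed
      have "Aop M \<xi> i \<in> Zp p" using Aop_Zp[OF g xps v row col] by blast
      then show False using i by simp
    qed
  qed
  then have "finite {i. Aop M \<xi> i \<notin> Zp p}" using fR fC finite_subset by blast
  moreover have "\<forall>i. Aop M \<xi> i \<in> ps" using Aop_ps[OF g xps v] by blast
  ultimately show ?thesis unfolding QpX_def by simp
qed

lemma valid_max: "valid M \<xi> e1 \<Longrightarrow> valid M \<eta> e2 \<Longrightarrow> valid M \<xi> (max e1 e2) \<and> valid M \<eta> (max e1 e2)"
  using valid_mono by (meson max.cobounded1 max.cobounded2)

lemma Aop_add:
  assumes g: "good M" and x: "\<xi> \<in> QpX p" and y: "\<eta> \<in> QpX p"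
  shows "Aop M (QpX_add p \<xi> \<eta>) = QpX_add p (Aop M \<xi>) (Aop M \<eta>)"
proof -
  obtain e1 e2 where "valid M \<xi> e1" "valid M \<eta> e2" using valid_ex[OF g x] valid_ex[OF g y] by blast
  then obtain e where vx: "valid M \<xi> e" and vy: "valid M \<eta> e" using valid_max by blast
  have xps: "\<And>j. \<xi> j \<in> ps" using QpX_ps[OF x] .
  have yps: "\<And>j. \<eta> j \<in> ps" using QpX_ps[OF y] .
  define \<zeta> where "\<zeta> = QpX_add p \<xi> \<eta>"
  have zj: "\<zeta> j = padic_add p (\<xi> j) (\<eta> j)" for j unfolding \<zeta>_def QpX_add_def by simp
  have zps: "\<And>j. \<zeta> j \<in> ps" unfolding zj using add_ps xps yps by blast
  have vz: "valid M \<zeta> e"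
    unfolding valid_def
  proof (intro conjI allI)
    fix i j show "dn e (M i j 0)" using vx unfolding valid_def by blast
  next
    fix j
    have "dn e (\<xi> j 0 + \<eta> j 0)" using vx vy dn_add unfolding valid_def by blast
    then show "dn e (\<zeta> j 0)" unfolding zj add_lvl by (rule dn_rmod)
  qed
  show ?thesis
  proof (rule ext, rule ext)
    fix i n
    define m where "m = n + e"
    have m: "n + e \<le> m" unfolding m_def by simp
    have L: "Aop M \<zeta> i n = rmod (Tsum M \<zeta> i m) (of_nat p ^ n)" using Aop_eq[OF g zps vz m] .
    have Lx: "Aop M \<xi> i n = rmod (Tsum M \<xi> i m) (of_nat p ^ n)" using Aop_eq[OF g xps vx m] .
    have Ly: "Aop M \<eta> i n = rmod (Tsum M \<eta> i m) (of_nat p ^ n)" using Aop_eq[OF g yps vy m] .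
    have "cg n (Tsum M \<zeta> i m) (\<Sum>j\<in>Sset M i m. M i j m * (\<xi> j m + \<eta> j m))"
      unfolding Tsum_def
    proof (rule cg_sum)
      fix j
      have "cg m (\<zeta> j m) (\<xi> j m + \<eta> j m)" unfolding zj add_lvl by (rule cg_rmod)
      moreover have "dn e (M i j m)" using vx ps_dn good_ps[OF g] unfolding valid_def by blast
      ultimately show "cg n (M i j m * \<zeta> j m) (M i j m * (\<xi> j m + \<eta> j m))" using m by (rule cg_mult_dn')
    qed
    also have "(\<Sum>j\<in>Sset M i m. M i j m * (\<xi> j m + \<eta> j m)) = Tsum M \<xi> i m + Tsum M \<eta> i m"
      unfolding Tsum_def by (simp add: distrib_left sum.distrib)
    finally have 1: "cg n (Tsum M \<zeta> i m) (Tsum M \<xi> i m + Tsum M \<eta> i m)" .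
    have 2: "cg n (Tsum M \<xi> i m + Tsum M \<eta> i m) (Aop M \<xi> i n + Aop M \<eta> i n)"
      unfolding Lx Ly by (intro cg_add cg_rmod')
    have "cg n (Tsum M \<zeta> i m) (Aop M \<xi> i n + Aop M \<eta> i n)" using 1 2 by (rule cg_trans)
    then have "rmod (Tsum M \<zeta> i m) (of_nat p ^ n) = rmod (Aop M \<xi> i n + Aop M \<eta> i n) (of_nat p ^ n)"
      by (rule rmod_cg_eq)
    then have "Aop M \<zeta> i n = rmod (Aop M \<xi> i n + Aop M \<eta> i n) (of_nat p ^ n)" using L by simp
    then show "Aop M (QpX_add p \<xi> \<eta>) i n = QpX_add p (Aop M \<xi>) (Aop M \<eta>) i n"
      unfolding \<zeta>_def by (simp add: QpX_add_def add_lvl)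
  qed
qed

lemma Aop_smul:
  assumes g: "good M" and c: "c \<in> Zp p" and x: "\<xi> \<in> QpX p"
  shows "Aop M (QpX_smul p c \<xi>) = QpX_smul p c (Aop M \<xi>)"
proof -
  obtain e where vx: "valid M \<xi> e" using valid_ex[OF g x] by blast
  have xps: "\<And>j. \<xi> j \<in> ps" using QpX_ps[OF x] .
  have dx: "\<And>j. dn e (\<xi> j 0)" using vx unfolding valid_def by blast
  define \<zeta> where "\<zeta> = QpX_smul p c \<xi>"
  have zj: "\<zeta> j = padic_smul p c (\<xi> j)" for j unfolding \<zeta>_def QpX_smul_def by simp
  have zps: "\<And>j. \<zeta> j \<in> ps" unfolding zj using smul_ps c xps by blast
  have vz: "valid M \<zeta> e"
    unfolding valid_def
  proof (intro conjI allI)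
    fix i j show "dn e (M i j 0)" using vx unfolding valid_def by blast
  next
    fix j
    have "dn (0 + e) (c (0 + nat (den (\<xi> j 0))) * \<xi> j 0)" using Zp_dn[OF c] dx by (rule dn_mult)
    then show "dn e (\<zeta> j 0)" unfolding zj smul_lvl using dn_rmod[of e _ 0] by simp
  qed
  show ?thesis
  proof (rule ext, rule ext)
    fix i n
    define m where "m = n + e"
    have m: "n + e \<le> m" unfolding m_def by simp
    have L: "Aop M \<zeta> i n = rmod (Tsum M \<zeta> i m) (of_nat p ^ n)" using Aop_eq[OF g zps vz m] .
    have Lx: "Aop M \<xi> i n = rmod (Tsum M \<xi> i m) (of_nat p ^ n)" using Aop_eq[OF g xps vx m] .
    have "cg n (Tsum M \<zeta> i m) (\<Sum>j\<in>Sset M i m. M i j m * (c (m + e) * \<xi> j m))"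
      unfolding Tsum_def
    proof (rule cg_sum)
      fix j
      have "cg m (\<zeta> j m) (c (m + e) * \<xi> j m)" unfolding zj using SM[OF xps c dx] by simp
      moreover have "dn e (M i j m)" using vx ps_dn good_ps[OF g] unfolding valid_def by blast
      ultimately show "cg n (M i j m * \<zeta> j m) (M i j m * (c (m + e) * \<xi> j m))" using m by (rule cg_mult_dn')
    qed
    also have "(\<Sum>j\<in>Sset M i m. M i j m * (c (m + e) * \<xi> j m)) = c (m + e) * Tsum M \<xi> i m"
      unfolding Tsum_def by (simp add: sum_distrib_left mult.left_commute)
    finally have 1: "cg n (Tsum M \<zeta> i m) (c (m + e) * Tsum M \<xi> i m)" .
    have aps: "Aop M \<xi> i \<in> ps" using Aop_ps[OF g xps vx] .
    have a0: "Aop M \<xi> i 0 = rmod (Tsum M \<xi> i e) (of_nat p ^ 0)" by (rule Aop_eq[OF g xps vx]) simp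
    have da: "dn (e + e) (Aop M \<xi> i 0)" unfolding a0 using Tsum_dn[OF g xps vx] by (rule dn_rmod)
    have 2: "cg n (padic_smul p c (Aop M \<xi> i) n) (c (m + e) * Aop M \<xi> i n)"
      using SM[OF aps c da] m by simp
    have "cg (n + 0) (Aop M \<xi> i n) (Tsum M \<xi> i m)" unfolding Lx using cg_rmod by simp
    then have 3: "cg n (c (m + e) * Aop M \<xi> i n) (c (m + e) * Tsum M \<xi> i m)" using Zp_dn[OF c] by (rule cg_mult_dn)
    have "cg n (rmod (Tsum M \<zeta> i m) (of_nat p ^ n)) (padic_smul p c (Aop M \<xi> i) n)"
      using cg_rmod 1 2 3 cg_trans cg_sym by meson
    moreover have "0 \<le> padic_smul p c (Aop M \<xi> i) n" "padic_smul p c (Aop M \<xi> i) n < of_nat p ^ n"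
      unfolding smul_lvl by (rule rmod_ge, rule rmod_lt)
    ultimately have "rmod (Tsum M \<zeta> i m) (of_nat p ^ n) = padic_smul p c (Aop M \<xi> i) n"
      using cg_unique rmod_ge rmod_lt by blast
    then have "Aop M \<zeta> i n = padic_smul p c (Aop M \<xi> i) n" using L by simp
    then show "Aop M (QpX_smul p c \<xi>) i n = QpX_smul p c (Aop M \<xi>) i n"
      unfolding \<zeta>_def by (simp add: QpX_smul_def)
  qed
qed

lemma one_0: "padic_one p 0 = 0" using one_Zp Zp_iff by blast

lemma Aop_delta:
  assumes g: "good M"
  shows "Aop M (delta p j) i = M i j"
proof
  fix n
  obtain e where eM: "\<forall>i j. dn e (M i j 0)" using good_dn[OF g] by blast
  have dps: "\<And>k. delta p j k \<in> ps" unfolding delta_def using one_Zp zero_ps Zp_ps by simp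
  have v: "valid M (delta p j) e" unfolding valid_def delta_def using eM one_0
    by (simp add: padic_zero_def)
  define m where "m = n + e"
  have m: "n + e \<le> m" unfolding m_def by simp
  have L: "Aop M (delta p j) i n = rmod (Tsum M (delta p j) i m) (of_nat p ^ n)" using Aop_eq[OF g dps v m] .
  have tm: "M i k m * delta p j k m = (if k = j then M i j m * padic_one p m else 0)" for k
    unfolding delta_def padic_zero_def by simp
  have T: "Tsum M (delta p j) i m = (if j \<in> Sset M i m then M i j m * padic_one p m else 0)"
    unfolding Tsum_def tm using sum.delta[OF good_row[OF g], of j "\<lambda>_. M i j m * padic_one p m"] by simp
  have Mps: "M i j \<in> ps" using good_ps[OF g] .
  have "cg n (Tsum M (delta p j) i m) (M i j n)"
  proof (cases "j \<in> Sset M i m")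
    case True
    have "cg m (padic_one p m) 1" unfolding one_emb emb_def by (rule cg_rmod)
    moreover have "dn e (M i j m)" using eM ps_dn Mps by blast
    ultimately have "cg n (M i j m * padic_one p m) (M i j m * 1)" using m by (rule cg_mult_dn')
    moreover have "cg n (M i j m) (M i j n)" using ps_cg[OF Mps] m by simp
    ultimately show ?thesis unfolding T using True cg_trans by simp
  next
    case False
    then have "M i j m = 0" unfolding Sset_def by simp
    then have "M i j n = 0" using ps_rmod[OF Mps, of n m] m by simp
    then show ?thesis unfolding T using False by simp
  qed
  then have "rmod (Tsum M (delta p j) i m) (of_nat p ^ n) = rmod (M i j n) (of_nat p ^ n)" by (rule rmod_cg_eq)
  also have "\<dots> = M i j n" using rmod_id ps_D(1,2) Mps by blast
  finally show "Aop M (delta p j) i n = M i j n" unfolding L .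
qed

lemma Aop_matrix: "good M \<Longrightarrow> op_matrix p (Aop M) = M"
proof -
  assume g: "good M"
  show ?thesis unfolding op_matrix_def using Aop_delta[OF g] by (intro ext) simp
qed



lemma Aop_cont:
  fixes M :: "'x \<Rightarrow> 'x \<Rightarrow> nat \<Rightarrow> rat"
  assumes g: "good M"
  shows "tau_continuous p (Aop M)"
  unfolding tau_continuous_def
proof (intro allI impI)
  fix U :: "('x \<Rightarrow> nat \<Rightarrow> rat) set" assume U: "tau_open p U"
  have Ub: "\<And>P. finite P \<Longrightarrow> \<forall>\<eta>\<in>U \<inter> TP P. \<exists>H N. finite H \<and> {\<xi>' \<in> TP P. \<forall>j\<in>H. \<xi>' j N = \<eta> j N} \<subseteq> U"
    using U unfolding tau_open_iff by blast
  show "tau_open p {\<xi> \<in> QpX p. Aop M \<xi> \<in> U}"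
    unfolding tau_open_iff
  proof (intro conjI allI impI ballI)
    show "{\<xi> \<in> QpX p. Aop M \<xi> \<in> U} \<subseteq> QpX p" by blast
    fix P \<xi> assume P: "finite P" and \<xi>: "\<xi> \<in> {\<xi> \<in> QpX p. Aop M \<xi> \<in> U} \<inter> TP P"
    have xq: "\<xi> \<in> QpX p" and aU: "Aop M \<xi> \<in> U" and xT: "\<xi> \<in> TP P" using \<xi> by auto
    obtain e where v: "valid M \<xi> e" using valid_ex[OF g xq] by blast
    have xps: "\<And>j. \<xi> j \<in> ps" using QpX_ps[OF xq] .
    define Q where "Q = fst ` {(i, j). M i j \<notin> Zp p} \<union> (\<Union>j\<in>P. {i. M i j e \<noteq> 0})"
    have fQ: "finite Q" unfolding Q_def using good_fin[OF g] good_col[OF g] P by blast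
    have claim: "valid M \<xi>' e \<and> Aop M \<xi>' \<in> TP Q \<and> (\<forall>j. \<xi>' j \<in> ps)"
      if a: "\<xi>' \<in> TP P" and b: "\<forall>j\<in>P. \<xi>' j 0 = \<xi> j 0" for \<xi>'
    proof -
      have sp': "\<xi>' j \<in> sp P j" for j using a unfolding TP_def by blast
      have ps': "\<xi>' j \<in> ps" for j using sp'[of j] sp_ps[of P j] by blast
      have v': "valid M \<xi>' e" unfolding valid_def
      proof (intro conjI allI)
        fix i j show "dn e (M i j 0)" using v unfolding valid_def by blast
      next
        fix j show "dn e (\<xi>' j 0)"
        proof (cases "j \<in> P")
          case True then show ?thesis using b v unfolding valid_def by simp
        next
          case False then have "\<xi>' j \<in> Zp p" using sp'[of j] unfolding sp_def by simp
          then show ?thesis unfolding Zp_iff by simp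
        qed
      qed
      have "Aop M \<xi>' i \<in> sp Q i" for i
      proof (cases "i \<in> Q")
        case True then show ?thesis unfolding sp_def using Aop_ps[OF g ps' v'] by simp
      next
        case False
        have row: "M i j \<in> Zp p" for j
        proof (rule ccontr)
          assume "M i j \<notin> Zp p"
          then have "(i, j) \<in> {(i, j). M i j \<notin> Zp p}" by simp
          then have "i \<in> Q" unfolding Q_def by (metis UnI1 fst_conv image_eqI)
          then show False using False by blast
        qed
        have col: "\<xi>' j \<in> Zp p" if "M i j e \<noteq> 0" for j
        proof (cases "j \<in> P")
          case True then have "i \<in> Q" unfolding Q_def using that by blast
          then show ?thesis using False by blast
        next
          case False then show ?thesis using sp'[of j] unfolding sp_def by simp
        qed
        show ?thesis unfolding sp_def using False Aop_Zp[OF g ps' v' row col] by simp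
      qed
      then have "Aop M \<xi>' \<in> TP Q" unfolding TP_def by blast
      then show ?thesis using v' ps' by blast
    qed
    have "Aop M \<xi> \<in> TP Q" using claim[OF xT] by blast
    then have "Aop M \<xi> \<in> U \<inter> TP Q" using aU by blast
    then have "\<exists>G N. finite G \<and> {\<eta>' \<in> TP Q. \<forall>i\<in>G. \<eta>' i N = Aop M \<xi> i N} \<subseteq> U"
      using Ub[OF fQ] by (rule bspec[rotated])
    then obtain G N where G: "finite G" and GN: "{\<eta>' \<in> TP Q. \<forall>i\<in>G. \<eta>' i N = Aop M \<xi> i N} \<subseteq> U"
      by blast
    define K where "K = N + e"
    define H where "H = P \<union> (\<Union>i\<in>G. Sset M i K)"
    have fH: "finite H" unfolding H_def using P G good_row[OF g] by blast
    have "{\<xi>' \<in> TP P. \<forall>j\<in>H. \<xi>' j K = \<xi> j K} \<subseteq> {\<xi> \<in> QpX p. Aop M \<xi> \<in> U}"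
    proof
      fix \<xi>' assume a: "\<xi>' \<in> {\<xi>' \<in> TP P. \<forall>j\<in>H. \<xi>' j K = \<xi> j K}"
      have aT: "\<xi>' \<in> TP P" and aH: "\<And>j. j \<in> H \<Longrightarrow> \<xi>' j K = \<xi> j K" using a by auto
      have ps1: "\<xi>' j \<in> ps" for j using aT sp_ps[of P j] unfolding TP_def by blast
      have "\<forall>j\<in>P. \<xi>' j 0 = \<xi> j 0"
      proof
        fix j assume "j \<in> P"
        then have "\<xi>' j K = \<xi> j K" using aH unfolding H_def by blast
        then show "\<xi>' j 0 = \<xi> j 0" using ps_eq_le[OF ps1 xps] by blast
      qed
      then have c: "valid M \<xi>' e" "Aop M \<xi>' \<in> TP Q" "\<And>j. \<xi>' j \<in> ps" using claim[OF aT] by auto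
      have "Aop M \<xi>' i N = Aop M \<xi> i N" if i: "i \<in> G" for i
      proof -
        have "Tsum M \<xi>' i K = Tsum M \<xi> i K" unfolding Tsum_def
        proof (rule sum.cong)
          fix j assume "j \<in> Sset M i K"
          then have "j \<in> H" unfolding H_def using i by blast
          then show "M i j K * \<xi>' j K = M i j K * \<xi> j K" using aH by simp
        qed simp
        moreover have "Aop M \<xi>' i N = rmod (Tsum M \<xi>' i K) (of_nat p ^ N)"
          using Aop_eq[OF g c(3) c(1)] unfolding K_def by simp
        moreover have "Aop M \<xi> i N = rmod (Tsum M \<xi> i K) (of_nat p ^ N)"
          using Aop_eq[OF g xps v] unfolding K_def by simp
        ultimately show ?thesis by simp
      qed
      then have "Aop M \<xi>' \<in> {\<eta>' \<in> TP Q. \<forall>i\<in>G. \<eta>' i N = Aop M \<xi> i N}" using c(2) by blast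
      then have "Aop M \<xi>' \<in> U" using GN by blast
      moreover have "\<xi>' \<in> QpX p" using TP_QpX[OF P] aT by blast
      ultimately show "\<xi>' \<in> {\<xi> \<in> QpX p. Aop M \<xi> \<in> U}" by blast
    qed
    then show "\<exists>H N. finite H \<and> {\<xi>' \<in> TP P. \<forall>j\<in>H. \<xi>' j N = \<xi> j N} \<subseteq> {\<xi> \<in> QpX p. Aop M \<xi> \<in> U}"
      using fH by (intro exI conjI)
  qed
qed

lemma Aop_bounded: "good M \<Longrightarrow> Aop M \<in> bounded_ops p"
  unfolding bounded_ops_def Zp_linear_def
  using Aop_QpX Aop_add Aop_smul Aop_cont by blast



lemma smul_zero_left: "padic_smul p padic_zero y = padic_zero"
  unfolding padic_smul_def padic_zero_def by simp

lemma smul_zero_right: "padic_smul p c padic_zero = padic_zero"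
  unfolding padic_smul_def padic_zero_def by simp

definition z0 :: "'x \<Rightarrow> nat \<Rightarrow> rat" where "z0 = (\<lambda>i. padic_zero)"

lemma z0_QpX: "z0 \<in> QpX p" unfolding z0_def QpX_def using zero_ps zero_Zp by simp

lemma delta_QpX: "delta p j \<in> QpX p"
  unfolding QpX_def delta_def using one_Zp zero_Zp Zp_ps by auto

lemma lin_zero: "Zp_linear p A \<Longrightarrow> A z0 = z0"
proof -
  assume L: "Zp_linear p A"
  have e: "QpX_smul p padic_zero \<xi> = z0" for \<xi> :: "'a \<Rightarrow> nat \<Rightarrow> rat"
    unfolding QpX_smul_def z0_def smul_zero_left by simp
  have "A (QpX_smul p padic_zero z0) = QpX_smul p padic_zero (A z0)"
    using L zero_Zp z0_QpX unfolding Zp_linear_def by blast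
  then show ?thesis unfolding e .
qed

lemma V_open: "tau_open p {\<eta> \<in> QpX p. (\<forall>i. \<eta> i \<in> Zp p) \<and> \<eta> k n = 0}"
  unfolding tau_open_iff
proof (intro conjI allI impI ballI)
  show "{\<eta> \<in> QpX p. (\<forall>i. \<eta> i \<in> Zp p) \<and> \<eta> k n = 0} \<subseteq> QpX p" by blast
  fix P \<eta> assume P: "finite P" and \<eta>: "\<eta> \<in> {\<eta> \<in> QpX p. (\<forall>i. \<eta> i \<in> Zp p) \<and> \<eta> k n = 0} \<inter> TP P"
  have "{\<xi>' \<in> TP P. \<forall>j\<in>insert k P. \<xi>' j n = \<eta> j n} \<subseteq> {\<eta> \<in> QpX p. (\<forall>i. \<eta> i \<in> Zp p) \<and> \<eta> k n = 0}"
  proof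
    fix \<xi>' assume a: "\<xi>' \<in> {\<xi>' \<in> TP P. \<forall>j\<in>insert k P. \<xi>' j n = \<eta> j n}"
    have aT: "\<xi>' \<in> TP P" and aH: "\<And>j. j \<in> insert k P \<Longrightarrow> \<xi>' j n = \<eta> j n" using a by auto
    have ps1: "\<xi>' j \<in> ps" for j using aT sp_ps[of P j] unfolding TP_def by blast
    have "\<xi>' i \<in> Zp p" for i
    proof (cases "i \<in> P")
      case True
      have "\<forall>i. \<eta> i \<in> Zp p" using \<eta> by simp
      then have "\<eta> i \<in> Zp p" by blast
      then have e1: "\<eta> i \<in> ps" and e2: "\<eta> i 0 = 0" unfolding Zp_iff by auto
      have e3: "\<xi>' i n = \<eta> i n" using aH True by blast
      have "\<xi>' i 0 = \<eta> i 0" using ps_eq_le[OF ps1 e1 e3, of 0] by simp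
      then have "\<xi>' i 0 = 0" using e2 by simp
      then show ?thesis unfolding Zp_iff using ps1 by blast
    next
      case False
      have "\<xi>' i \<in> sp P i" using aT unfolding TP_def by blast
      then show ?thesis using False unfolding sp_def by simp
    qed
    moreover have "\<xi>' k n = 0" using aH \<eta> by simp
    moreover have "\<xi>' \<in> QpX p" using TP_QpX[OF P] aT by blast
    ultimately show "\<xi>' \<in> {\<eta> \<in> QpX p. (\<forall>i. \<eta> i \<in> Zp p) \<and> \<eta> k n = 0}" by blast
  qed
  moreover have "finite (insert k P)" using P by simp
  ultimately show "\<exists>H N. finite H \<and> {\<xi>' \<in> TP P. \<forall>j\<in>H. \<xi>' j N = \<eta> j N} \<subseteq> {\<eta> \<in> QpX p. (\<forall>i. \<eta> i \<in> Zp p) \<and> \<eta> k n = 0}"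
    by (intro exI conjI)
qed

lemma fwd_box:
  assumes A: "A \<in> bounded_ops p"
  shows "\<exists>H. finite H \<and> (\<forall>j. j \<notin> H \<longrightarrow> (\<forall>i. A (delta p j) i \<in> Zp p) \<and> A (delta p j) k n = 0)"
proof -
  have L: "Zp_linear p A" and C: "tau_continuous p A" using A unfolding bounded_ops_def by auto
  define V where "V = {\<eta> \<in> QpX p. (\<forall>i. \<eta> i \<in> Zp p) \<and> \<eta> k n = 0}"
  have "tau_open p V" unfolding V_def by (rule V_open)
  then have "tau_open p {\<xi> \<in> QpX p. A \<xi> \<in> V}" using C unfolding tau_continuous_def by blast
  then have W: "\<forall>P. finite P \<longrightarrow> (\<forall>\<xi>\<in>{\<xi> \<in> QpX p. A \<xi> \<in> V} \<inter> TP P. \<exists>H N. finite H \<and>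
      {\<xi>' \<in> TP P. \<forall>j\<in>H. \<xi>' j N = \<xi> j N} \<subseteq> {\<xi> \<in> QpX p. A \<xi> \<in> V})"
    unfolding tau_open_iff by (rule conjunct2)
  have z0T: "z0 \<in> TP {}" unfolding TP_def sp_def z0_def using zero_Zp by simp
  have "A z0 = z0" using lin_zero[OF L] .
  then have "A z0 \<in> V" unfolding V_def z0_def using z0_QpX zero_Zp by (simp add: z0_def padic_zero_def)
  then have z0in: "z0 \<in> {\<xi> \<in> QpX p. A \<xi> \<in> V} \<inter> TP {}" using z0T by (simp add: z0_QpX)
  have "\<exists>H N. finite H \<and> {\<xi>' \<in> TP {}. \<forall>j\<in>H. \<xi>' j N = z0 j N} \<subseteq> {\<xi> \<in> QpX p. A \<xi> \<in> V}"
    using W[rule_format, OF finite.emptyI z0in] .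
  then obtain H N where H: "finite H" and HN: "{\<xi>' \<in> TP {}. \<forall>j\<in>H. \<xi>' j N = z0 j N} \<subseteq> {\<xi> \<in> QpX p. A \<xi> \<in> V}"
    by blast
  have jp: "(\<forall>i. A (delta p j) i \<in> Zp p) \<and> A (delta p j) k n = 0" if j: "j \<notin> H" for j
  proof -
    have "delta p j \<in> TP {}" unfolding TP_def sp_def delta_def using one_Zp zero_Zp by simp
    moreover have "\<forall>i\<in>H. delta p j i N = z0 i N" unfolding delta_def z0_def using j by auto
    ultimately have "A (delta p j) \<in> V" using HN by blast
    then show ?thesis unfolding V_def by blast
  qed
  show ?thesis by (rule exI[of _ H]) (use H jp in blast)
qed

lemma fwd_a:
  assumes A: "A \<in> bounded_ops p"
  shows "finite {(i, j). op_matrix p A i j \<notin> Zp p}"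
proof -
  obtain H where H: "finite H" and HN: "\<And>j. j \<notin> H \<Longrightarrow> (\<forall>i. A (delta p j) i \<in> Zp p)"
    using fwd_box[OF A, of undefined 0] by blast
  have L: "Zp_linear p A" using A unfolding bounded_ops_def by auto
  have fin: "finite {i. A (delta p j) i \<notin> Zp p}" for j
  proof -
    have "A (delta p j) \<in> QpX p" using L delta_QpX[of j] unfolding Zp_linear_def by blast
    then show ?thesis unfolding QpX_def by blast
  qed
  have "{(i, j). op_matrix p A i j \<notin> Zp p} \<subseteq> (\<lambda>(j, i). (i, j)) ` (SIGMA j:H. {i. A (delta p j) i \<notin> Zp p})"
  proof
    fix x assume "x \<in> {(i, j). op_matrix p A i j \<notin> Zp p}"
    then obtain i j where x: "x = (i, j)" "A (delta p j) i \<notin> Zp p" unfolding op_matrix_def by blast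
    then have "j \<in> H" using HN by blast
    then have "(j, i) \<in> (SIGMA j:H. {i. A (delta p j) i \<notin> Zp p})" using x by blast
    then have "(\<lambda>(j, i). (i, j)) (j, i) \<in> (\<lambda>(j, i). (i, j)) ` (SIGMA j:H. {i. A (delta p j) i \<notin> Zp p})"
      by (rule imageI)
    then show "x \<in> (\<lambda>(j, i). (i, j)) ` (SIGMA j:H. {i. A (delta p j) i \<notin> Zp p})" using x(1) by simp
  qed
  moreover have "finite ((\<lambda>(j, i). (i, j)) ` (SIGMA j:H. {i. A (delta p j) i \<notin> Zp p}))"
    using H fin by (intro finite_imageI finite_SigmaI)
  ultimately show ?thesis using finite_subset by blast
qed

lemma fwd_b:
  assumes A: "A \<in> bounded_ops p" and eps: "\<epsilon> > 0"
  shows "finite {j. padic_abs p (op_matrix p A k j) > \<epsilon>}"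
proof -
  obtain n where n: "1 / real p ^ n < \<epsilon>" using small_pow eps by blast
  obtain H where H: "finite H" and HN: "\<And>j. j \<notin> H \<Longrightarrow> A (delta p j) k n = 0"
    using fwd_box[OF A, of k n] by blast
  have L: "Zp_linear p A" using A unfolding bounded_ops_def by auto
  have "{j. padic_abs p (op_matrix p A k j) > \<epsilon>} \<subseteq> H"
  proof
    fix j assume j: "j \<in> {j. padic_abs p (op_matrix p A k j) > \<epsilon>}"
    show "j \<in> H"
    proof (rule ccontr)
      assume "j \<notin> H"
      then have z: "A (delta p j) k n = 0" using HN by blast
      have "A (delta p j) \<in> QpX p" using L delta_QpX[of j] unfolding Zp_linear_def by blast
      then have "A (delta p j) k \<in> ps" by (rule QpX_ps)
      then have "padic_abs p (A (delta p j) k) \<le> 1 / real p ^ n" using lvl_zero z by blast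
      then show False using j n unfolding op_matrix_def by simp
    qed
  qed
  then show ?thesis using H finite_subset by blast
qed

lemma emb_pow_n: "emb (of_nat p ^ n) n = 0"
proof -
  have "cg n (of_nat p ^ n) 0" using cg_pow[of n 1] by simp
  then show ?thesis unfolding emb_def by (rule rmod_eq_0)
qed

lemma smul_unit:
  "padic_smul p (emb (of_nat p ^ n)) (emb (1 / of_nat p ^ n)) = padic_one p"
proof
  fix m
  let ?c = "emb (of_nat p ^ n)" and ?y = "emb (1 / of_nat p ^ n)"
  have c: "?c \<in> Zp p" using emb_Zp dn_of_nat_pow by blast
  have dy: "dn n (1 / of_nat p ^ n)" by (rule dn_inv_pow)
  have y: "?y \<in> ps" using emb_ps[OF dy] .
  have dy0: "dn n (?y 0)" unfolding emb_def using dn_rmod[OF dy] .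
  have 1: "cg m (padic_smul p ?c ?y m) (?c (m + n) * ?y m)" using SM[OF y c dy0] by simp
  have "cg (m + n) (?c (m + n)) (of_nat p ^ n)" unfolding emb_def by (rule cg_rmod)
  moreover have "dn n (?y m)" using ps_dn[OF y dy0] .
  ultimately have 2: "cg m (?c (m + n) * ?y m) (of_nat p ^ n * ?y m)" by (rule cg_mult_dn2) simp
  have "cg (m + 0) (?y m) (1 / of_nat p ^ n)" unfolding emb_def using cg_rmod by simp
  then have "cg m (of_nat p ^ n * ?y m) (of_nat p ^ n * (1 / of_nat p ^ n))" using dn_of_nat_pow by (rule cg_mult_dn)
  then have 3: "cg m (of_nat p ^ n * ?y m) 1" using p2 by simp
  have 4: "cg m 1 (padic_one p m)" unfolding one_emb emb_def by (rule cg_rmod')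
  have "cg m (padic_smul p ?c ?y m) (padic_one p m)" using 1 2 3 4 cg_trans by blast
  moreover have "0 \<le> padic_smul p ?c ?y m" "padic_smul p ?c ?y m < of_nat p ^ m"
    unfolding smul_lvl by (rule rmod_ge, rule rmod_lt)
  moreover have "0 \<le> padic_one p m" "padic_one p m < of_nat p ^ m"
    unfolding one_emb emb_def by (rule rmod_ge, rule rmod_lt)
  ultimately show "padic_smul p ?c ?y m = padic_one p m" using cg_unique by blast
qed

lemma fwd_c:
  assumes A: "A \<in> bounded_ops p" and eps: "\<epsilon> > 0"
  shows "finite {i. padic_abs p (op_matrix p A i k) > \<epsilon>}"
proof -
  obtain n where n: "1 / real p ^ n < \<epsilon>" using small_pow eps by blast
  have L: "Zp_linear p A" using A unfolding bounded_ops_def by auto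
  let ?c = "emb (of_nat p ^ n)" and ?y = "emb (1 / of_nat p ^ n)"
  define \<eta> where "\<eta> = (\<lambda>i. if i = k then ?y else padic_zero)"
  have c: "?c \<in> Zp p" using emb_Zp dn_of_nat_pow by blast
  have y: "?y \<in> ps" using emb_ps[OF dn_inv_pow] .
  have \<eta>q: "\<eta> \<in> QpX p"
  proof -
    have "\<forall>i. \<eta> i \<in> ps" unfolding \<eta>_def using y zero_ps by simp
    moreover have "{i. \<eta> i \<notin> Zp p} \<subseteq> {k}" unfolding \<eta>_def using zero_Zp by auto
    then have "finite {i. \<eta> i \<notin> Zp p}" using finite_subset by blast
    ultimately show ?thesis unfolding QpX_def by simp
  qed
  have sd: "QpX_smul p ?c \<eta> = delta p k"
    unfolding QpX_smul_def \<eta>_def delta_def using smul_unit smul_zero_right by (intro ext) auto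
  define \<theta> where "\<theta> = A \<eta>"
  have \<theta>q: "\<theta> \<in> QpX p" unfolding \<theta>_def using L \<eta>q unfolding Zp_linear_def by blast
  have col: "A (delta p k) = QpX_smul p ?c \<theta>"
    unfolding \<theta>_def sd[symmetric] using L c \<eta>q unfolding Zp_linear_def by blast
  have "{i. padic_abs p (op_matrix p A i k) > \<epsilon>} \<subseteq> {i. \<theta> i \<notin> Zp p}"
  proof
    fix i assume i: "i \<in> {i. padic_abs p (op_matrix p A i k) > \<epsilon>}"
    show "i \<in> {i. \<theta> i \<notin> Zp p}"
    proof (rule ccontr)
      assume "i \<notin> {i. \<theta> i \<notin> Zp p}"
      then have tz: "\<theta> i \<in> Zp p" by simp
      have tps: "\<theta> i \<in> ps" using Zp_ps[OF tz] .
      have d0: "dn 0 (\<theta> i 0)" using Zp_dn[OF tz] .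
      have Mik: "op_matrix p A i k = padic_smul p ?c (\<theta> i)"
        unfolding op_matrix_def col QpX_smul_def by simp
      have "cg n (padic_smul p ?c (\<theta> i) n) (?c n * \<theta> i n)" using SM[OF tps c d0] by simp
      then have "cg n (padic_smul p ?c (\<theta> i) n) 0" using emb_pow_n by simp
      moreover have "0 \<le> padic_smul p ?c (\<theta> i) n" "padic_smul p ?c (\<theta> i) n < of_nat p ^ n"
        unfolding smul_lvl by (rule rmod_ge, rule rmod_lt)
      ultimately have z: "padic_smul p ?c (\<theta> i) n = 0" using cg_unique qpos[of n] by (metis order_refl)
      have "padic_smul p ?c (\<theta> i) \<in> ps" using smul_ps[OF c tps] .
      then have "padic_abs p (padic_smul p ?c (\<theta> i)) \<le> 1 / real p ^ n" using lvl_zero z by blast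
      then show False using i n Mik by simp
    qed
  qed
  moreover have "finite {i. \<theta> i \<notin> Zp p}" using \<theta>q unfolding QpX_def by blast
  ultimately show ?thesis using finite_subset by blast
qed

end

theorem theorem2p26:
  fixes p :: nat and M :: "'x \<Rightarrow> 'x \<Rightarrow> (nat \<Rightarrow> rat)"
  assumes "prime p"
    and "countable (UNIV :: 'x set)"
    and "\<forall>i j. M i j \<in> padic_set p"
  shows "(\<exists>A \<in> bounded_ops p. M = op_matrix p A) \<longleftrightarrow>
           (finite {(i, j). M i j \<notin> Zp p}
            \<and> (\<forall>k. \<forall>\<epsilon>::real. \<epsilon> > 0 \<longrightarrow>
                  finite {i. padic_abs p (M i k) > \<epsilon>}
                \<and> finite {j. padic_abs p (M k j) > \<epsilon>}))"
proof -
  interpret padic p using assms(1) by unfold_locales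
  show ?thesis
  proof
    assume "\<exists>A \<in> bounded_ops p. M = op_matrix p A"
    then obtain A where A: "A \<in> bounded_ops p" and MA: "M = op_matrix p A" by blast
    have 1: "finite {(i, j). M i j \<notin> Zp p}" unfolding MA by (rule fwd_a[OF A])
    have 2: "finite {i. padic_abs p (M i k) > \<epsilon>} \<and> finite {j. padic_abs p (M k j) > \<epsilon>}"
      if "\<epsilon> > 0" for k \<epsilon> unfolding MA using fwd_b[OF A that] fwd_c[OF A that] by (intro conjI)
    show "finite {(i, j). M i j \<notin> Zp p}
            \<and> (\<forall>k. \<forall>\<epsilon>::real. \<epsilon> > 0 \<longrightarrow>
                  finite {i. padic_abs p (M i k) > \<epsilon>}
                \<and> finite {j. padic_abs p (M k j) > \<epsilon>})" using 1 2 by blast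
  next
    assume H: "finite {(i, j). M i j \<notin> Zp p}
            \<and> (\<forall>k. \<forall>\<epsilon>::real. \<epsilon> > 0 \<longrightarrow>
                  finite {i. padic_abs p (M i k) > \<epsilon>}
                \<and> finite {j. padic_abs p (M k j) > \<epsilon>})"
    have g: "good M" unfolding good_def using assms(3) H by (intro conjI) auto
    have "Aop M \<in> bounded_ops p" by (rule Aop_bounded[OF g])
    moreover have "M = op_matrix p (Aop M)" using Aop_matrix[OF g] by simp
    ultimately show "\<exists>A \<in> bounded_ops p. M = op_matrix p A" by blast
  qed
qed

end
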